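(* Let $\gamma\in\{0\}\cup(0,\infty)\cup\{\infty\}$. There exists a maximizer $(q^*,{\rho^1}^*,{\rho^2}^* )$ of the dual problem $$\sup_{q\in S^n_\infty,\ \rho^1,\rho^2\in[0,\gamma]^n}\ \sum_{x\in V}\min_{i\in I}\Big(C_i(x)+(\mathrm{div}_wq_i)(x)+\rho_i^2-\rho_i^1\Big)+\sum_{i=1}^n(\rho_i^1S_i^\ell-\rho_i^2S_i^u).$$ For $x\in V$ let $I_m(x)=\arg\min_{i\in I}\big(C_i(x)+(\mathrm{div}_wq_i^* )(x)+{\rho_i^2}^*-{\rho_i^1}^*\big)$. Then there exists a solution $u^*$ of the relaxed primal problem (the convex relaxed problem with size information determined by $\gamma$ as in the context) such that $(u^*;q^*,{\rho^1}^*,{\rho^2}^* )$ is a primal-dual pair, and at each $x\in V$ any such $u^*$ satisfies $\sum_{i\in I_m(x)}u_i^*(x)=1$ and $u_j^*(x)=0$ for $j\notin I_m(x)$. If $I_m(x)$ is a single index $\{i_0\}$ at the point $x$, then $u^*_{i_0}(x)=1$ and $u^*_i(x)=0$ for $i\ne i_0$. If $I_m(x)$ is a singleton at every $x\in V$, then this $u^*$ (given by the indicator formula) is an exact global binary minimizer of the original non-convex problem $\min_{u\in\mathcal{B}}$ of the same energy (with the same size penalty or constraints).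
   Context: Let $G=(V,E)$ be a finite undirected graph with symmetric weights $w(x,y)=w(y,x)>0$ for $\{x,y\}\in E$ and $w(x,y)=0$ otherwise. $TV_w(v)=\frac12\sum_{x,y\in V}w(x,y)|v(y)-v(x)|$ for $v:V\to\mathbb{R}$. For $\phi:V\times V\to\mathbb{R}$, $(\mathrm{div}_w\phi)(x)=\frac12\sum_{y\in V}w(x,y)(\phi(x,y)-\phi(y,x))$, $\|\phi\|_\infty=\max_{x,y}|\phi(x,y)|$, and $S^n_\infty=\{(q_1,\dots,q_n):q_i:V\times V\to\mathbb{R},\|q_i\|_\infty\le1\}$. Let $n\ge2$, $I=\{1,\dots,n\}$, $C_i:V\to\mathbb{R}$ given; $\|u_i\|=\sum_xu_i(x)$; $\mathcal{B}=\{u:V\to\{0,1\}^n:\sum_iu_i(x)=1\ \forall x\}$, $\mathcal{B}'=\{u:V\to[0,1]^n:\sum_iu_i(x)=1\ \forall x\}$. Size bounds are integers $0\le S_i^\ell\le S_i^u$ with $\sum_iS_i^\ell\le|V|\le\sum_iS_i^u$; for $0<\gamma<\infty$, $P_\gamma(t)=0$ if $S_i^\ell\le t\le S_i^u$, $\gamma(t-S_i^u)$ if $t>S_i^u$, $\gamma(S_i^\ell-t)$ if $t<S_i^\ell$; $[0,\infty]$ means $[0,\infty)$. The relaxed primal problem is $\min_{u\in\mathcal{B}'}\sum_i\sum_xC_i(x)u_i(x)+\sum_iTV_w(u_i)$, with no size terms if $\gamma=0$, with $\sum_iP_\gamma(\|u_i\|)$ added if $0<\gamma<\infty$, and under constraints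 $S_i^\ell\le\|u_i\|\le S_i^u$ if $\gamma=\infty$; the original problem is the same with $\mathcal{B}'$ replaced by $\mathcal{B}$. A primal-dual pair means a saddle point, with $u$ ranging over $\mathcal{B}'$ and $(q,\rho^1,\rho^2)$ over $S^n_\infty\times[0,\gamma]^n\times[0,\gamma]^n$, of $E(u;q,\rho^1,\rho^2)=\sum_{i}\sum_{x}u_i(x)\big(C_i(x)+(\mathrm{div}_wq_i)(x)+\rho_i^2-\rho_i^1\big)+\sum_i(\rho_i^1S_i^\ell-\rho_i^2S_i^u)$. *)

theory Defs
  imports "HOL-Analysis.Analysis"
begin

(* Vertex set V = UNIV of a finite type 'v; labels I = {1..n}; functions u_i : V -> R
   are encoded as u :: nat => 'v => real (only i in {1..n} matter). *)

definition TVw :: "('v::finite \<Rightarrow> 'v \<Rightarrow> real) \<Rightarrow> ('v \<Rightarrow> real) \<Rightarrow> real" where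
  "TVw w v = (1/2) * (\<Sum>x\<in>UNIV. \<Sum>y\<in>UNIV. w x y * \<bar>v y - v x\<bar>)"

definition divw :: "('v::finite \<Rightarrow> 'v \<Rightarrow> real) \<Rightarrow> ('v \<Rightarrow> 'v \<Rightarrow> real) \<Rightarrow> 'v \<Rightarrow> real" where
  "divw w \<phi> x = (1/2) * (\<Sum>y\<in>UNIV. w x y * (\<phi> x y - \<phi> y x))"

definition usize :: "('v::finite \<Rightarrow> real) \<Rightarrow> real" where
  "usize v = (\<Sum>x\<in>UNIV. v x)"

definition inBrel :: "nat \<Rightarrow> (nat \<Rightarrow> 'v \<Rightarrow> real) \<Rightarrow> bool" where
  "inBrel n u \<longleftrightarrow> (\<forall>x. (\<forall>i\<in>{1..n}. 0 \<le> u i x \<and> u i x \<le> 1) \<and> (\<Sum>i\<in>{1..n}. u i x) = 1)"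

definition inBbin :: "nat \<Rightarrow> (nat \<Rightarrow> 'v \<Rightarrow> real) \<Rightarrow> bool" where
  "inBbin n u \<longleftrightarrow> (\<forall>x. (\<forall>i\<in>{1..n}. u i x \<in> {0, 1}) \<and> (\<Sum>i\<in>{1..n}. u i x) = 1)"

definition Pgam :: "real \<Rightarrow> nat \<Rightarrow> nat \<Rightarrow> real \<Rightarrow> real" where
  "Pgam g sl su t = (if t > real su then g * (t - real su)
                     else if t < real sl then g * (real sl - t) else 0)"

definition energy ::
  "nat \<Rightarrow> ('v::finite \<Rightarrow> 'v \<Rightarrow> real) \<Rightarrow> (nat \<Rightarrow> 'v \<Rightarrow> real) \<Rightarrow> (nat \<Rightarrow> nat) \<Rightarrow> (nat \<Rightarrow> nat)
   \<Rightarrow> ereal \<Rightarrow> (nat \<Rightarrow> 'v \<Rightarrow> real) \<Rightarrow> real" where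
  "energy n w C Sl Su \<gamma> u =
     (\<Sum>i\<in>{1..n}. \<Sum>x\<in>UNIV. C i x * u i x) + (\<Sum>i\<in>{1..n}. TVw w (u i))
     + (if \<gamma> = \<infinity> then 0 else (\<Sum>i\<in>{1..n}. Pgam (real_of_ereal \<gamma>) (Sl i) (Su i) (usize (u i))))"

definition size_ok :: "nat \<Rightarrow> (nat \<Rightarrow> nat) \<Rightarrow> (nat \<Rightarrow> nat) \<Rightarrow> ereal \<Rightarrow> (nat \<Rightarrow> 'v::finite \<Rightarrow> real) \<Rightarrow> bool" where
  "size_ok n Sl Su \<gamma> u \<longleftrightarrow>
     (\<gamma> = \<infinity> \<longrightarrow> (\<forall>i\<in>{1..n}. real (Sl i) \<le> usize (u i) \<and> usize (u i) \<le> real (Su i)))"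

definition relaxed_sol where
  "relaxed_sol n w C Sl Su \<gamma> u \<longleftrightarrow> inBrel n u \<and> size_ok n Sl Su \<gamma> u \<and>
     (\<forall>u'. inBrel n u' \<and> size_ok n Sl Su \<gamma> u' \<longrightarrow> energy n w C Sl Su \<gamma> u \<le> energy n w C Sl Su \<gamma> u')"

definition orig_sol where
  "orig_sol n w C Sl Su \<gamma> u \<longleftrightarrow> inBbin n u \<and> size_ok n Sl Su \<gamma> u \<and>
     (\<forall>u'. inBbin n u' \<and> size_ok n Sl Su \<gamma> u' \<longrightarrow> energy n w C Sl Su \<gamma> u \<le> energy n w C Sl Su \<gamma> u')"

(* dual feasibility: q in S^n_infty, rho1, rho2 in [0,gamma]^n ([0,infty] meaning [0,infty)) *)
definition dual_feas :: "nat \<Rightarrow> ereal \<Rightarrow> (nat \<Rightarrow> 'v \<Rightarrow> 'v \<Rightarrow> real) \<Rightarrow> (nat \<Rightarrow> real) \<Rightarrow> (nat \<Rightarrow> real) \<Rightarrow> bool" where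
  "dual_feas n \<gamma> q \<rho>1 \<rho>2 \<longleftrightarrow>
     (\<forall>i\<in>{1..n}. \<forall>x y. \<bar>q i x y\<bar> \<le> 1) \<and>
     (\<forall>i\<in>{1..n}. 0 \<le> \<rho>1 i \<and> ereal (\<rho>1 i) \<le> \<gamma> \<and> 0 \<le> \<rho>2 i \<and> ereal (\<rho>2 i) \<le> \<gamma>)"

definition coef where
  "coef w C q \<rho>1 \<rho>2 i x = C i x + divw w (q i) x + \<rho>2 i - \<rho>1 i"

definition Lagr where
  "Lagr n w C Sl Su u q \<rho>1 \<rho>2 =
     (\<Sum>i\<in>{1..n}. \<Sum>x\<in>UNIV. u i x * coef w C q \<rho>1 \<rho>2 i x)
     + (\<Sum>i\<in>{1..n}. \<rho>1 i * real (Sl i) - \<rho>2 i * real (Su i))"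

definition dual_obj where
  "dual_obj n w C Sl Su q \<rho>1 \<rho>2 =
     (\<Sum>x\<in>UNIV. Min ((\<lambda>i. coef w C q \<rho>1 \<rho>2 i x) ` {1..n}))
     + (\<Sum>i\<in>{1..n}. \<rho>1 i * real (Sl i) - \<rho>2 i * real (Su i))"

definition dual_max where
  "dual_max n w C Sl Su \<gamma> q \<rho>1 \<rho>2 \<longleftrightarrow> dual_feas n \<gamma> q \<rho>1 \<rho>2 \<and>
     (\<forall>q' r1 r2. dual_feas n \<gamma> q' r1 r2 \<longrightarrow>
        dual_obj n w C Sl Su q' r1 r2 \<le> dual_obj n w C Sl Su q \<rho>1 \<rho>2)"

definition pd_pair where
  "pd_pair n w C Sl Su \<gamma> u q \<rho>1 \<rho>2 \<longleftrightarrow> inBrel n u \<and> dual_feas n \<gamma> q \<rho>1 \<rho>2 \<and>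
     (\<forall>u'. inBrel n u' \<longrightarrow> Lagr n w C Sl Su u q \<rho>1 \<rho>2 \<le> Lagr n w C Sl Su u' q \<rho>1 \<rho>2) \<and>
     (\<forall>q' r1 r2. dual_feas n \<gamma> q' r1 r2 \<longrightarrow> Lagr n w C Sl Su u q' r1 r2 \<le> Lagr n w C Sl Su u q \<rho>1 \<rho>2)"

definition Imin where
  "Imin n w C q \<rho>1 \<rho>2 x =
     {i\<in>{1..n}. coef w C q \<rho>1 \<rho>2 i x = Min ((\<lambda>j. coef w C q \<rho>1 \<rho>2 j x) ` {1..n})}"

end

theory Submission
  imports Defs
begin


lemma compact_PiE_UNIV:
  fixes S :: "'a \<Rightarrow> 'b::topological_space set"
  assumes "\<And>i. compact (S i)"
  shows "compact (Pi\<^sub>E UNIV S)"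
proof -
  have "compactin (product_topology (\<lambda>i. euclidean) UNIV) (Pi\<^sub>E UNIV S)"
    using assms by (simp add: compactin_PiE)
  then show ?thesis by (simp add: euclidean_product_topology)
qed

lemma cont_coord1 [continuous_intros]:
  "continuous_on S (\<lambda>u::'a \<Rightarrow> 'b::topological_space. u i)"
  by (rule continuous_on_subset[OF continuous_on_product_coordinates subset_UNIV])

lemma cont_coord2 [continuous_intros]:
  "continuous_on S (\<lambda>u::'a \<Rightarrow> 'c \<Rightarrow> 'b::topological_space. u i x)"
proof -
  have "continuous_on UNIV ((\<lambda>f. f x) \<circ> (\<lambda>u::'a \<Rightarrow> 'c \<Rightarrow> 'b. u i))"
    by (intro continuous_on_compose cont_coord1)
  then show ?thesis using continuous_on_subset by (auto simp: o_def)
qed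

lemma cont_coord3 [continuous_intros]:
  "continuous_on S (\<lambda>u::'a \<Rightarrow> 'c \<Rightarrow> 'd \<Rightarrow> 'b::topological_space. u i x y)"
proof -
  have "continuous_on UNIV ((\<lambda>f. f y) \<circ> (\<lambda>u::'a \<Rightarrow> 'c \<Rightarrow> 'd \<Rightarrow> 'b. u i x))"
    by (intro continuous_on_compose cont_coord1 cont_coord2)
  then show ?thesis using continuous_on_subset by (auto simp: o_def)
qed



lemma sq_pos_part_ineq:
  fixes b s :: real
  shows "(max 0 (b + s))\<^sup>2 \<le> (max 0 b)\<^sup>2 + 2 * max 0 b * s + s\<^sup>2"
proof (cases "b \<ge> 0")
  case True
  then have "(max 0 (b + s))\<^sup>2 \<le> (b + s)\<^sup>2"
    by (cases "b + s \<ge> 0") (auto simp: max_def)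
  then show ?thesis using True by (simp add: power2_eq_square algebra_simps max_def)
next
  case False
  then show ?thesis
    by (cases "b + s \<ge> 0") (auto simp: max_def power2_eq_square intro!: mult_mono)
qed

lemma sep_lemma:
  fixes U :: "'u::topological_space set" and f :: "'k \<Rightarrow> 'u \<Rightarrow> real"
    and mix :: "real \<Rightarrow> 'u \<Rightarrow> 'u \<Rightarrow> 'u"
  assumes cU: "compact U" and neU: "U \<noteq> {}" and fK: "finite K"
    and cf: "\<And>k. k \<in> K \<Longrightarrow> continuous_on U (f k)"
    and mixU: "\<And>t u v. 0 \<le> t \<Longrightarrow> t \<le> 1 \<Longrightarrow> u \<in> U \<Longrightarrow> v \<in> U \<Longrightarrow> mix t u v \<in> U"
    and mixf: "\<And>k t u v. k \<in> K \<Longrightarrow> 0 \<le> t \<Longrightarrow> t \<le> 1 \<Longrightarrow> u \<in> U \<Longrightarrow> v \<in> U \<Longrightarrow>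
        f k (mix t u v) = t * f k u + (1 - t) * f k v"
    and hyp: "\<And>u. u \<in> U \<Longrightarrow> \<exists>k\<in>K. f k u > 0"
  shows "\<exists>lam. (\<forall>k\<in>K. 0 \<le> lam k) \<and> (\<Sum>k\<in>K. lam k) = 1 \<and> (\<forall>u\<in>U. (\<Sum>k\<in>K. lam k * f k u) > 0)"
proof -
  define G where "G u = (\<Sum>k\<in>K. (max 0 (f k u))\<^sup>2)" for u
  have cG: "continuous_on U G"
    unfolding G_def by (intro continuous_intros cf)
  obtain u0 where u0: "u0 \<in> U" "\<And>v. v \<in> U \<Longrightarrow> G u0 \<le> G v"
    using continuous_attains_inf[OF cU neU cG] by blast
  define a where "a k = max 0 (f k u0)" for k
  have a_nn: "0 \<le> a k" for k by (simp add: a_def)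
  obtain k0 where k0: "k0 \<in> K" "f k0 u0 > 0" using hyp[OF u0(1)] by blast
  have afa: "a k * f k u0 = (a k)\<^sup>2" for k
    by (simp add: a_def max_def power2_eq_square)
  have pos: "(\<Sum>k\<in>K. a k * f k u0) > 0"
  proof -
    have "(\<Sum>k\<in>K. a k * f k u0) = (\<Sum>k\<in>K. (a k)\<^sup>2)" by (simp add: afa)
    also have "\<dots> \<ge> (a k0)\<^sup>2"
      by (rule member_le_sum) (use k0 fK in auto)
    finally show ?thesis using k0 by (smt (verit) zero_less_power a_def)
  qed
  have key: "(\<Sum>k\<in>K. a k * (f k u - f k u0)) \<ge> 0" if uU: "u \<in> U" for u
  proof (rule ccontr)
    define S where "S = (\<Sum>k\<in>K. a k * (f k u - f k u0))"
    define Q where "Q = (\<Sum>k\<in>K. (f k u - f k u0)\<^sup>2)"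
    assume "\<not> ?thesis"
    then have Sneg: "S < 0" by (simp add: S_def)
    have Qnn: "Q \<ge> 0" unfolding Q_def by (intro sum_nonneg) auto
    define t where "t = min 1 (- S / (Q + 1))"
    have t0: "t > 0" using Sneg Qnn by (simp add: t_def divide_neg_pos)
    have t1: "t \<le> 1" by (simp add: t_def)
    have tQ: "t * Q \<le> - S"
    proof -
      have "t * Q \<le> (- S / (Q + 1)) * Q"
        using Qnn by (intro mult_right_mono) (auto simp: t_def)
      also have "\<dots> \<le> - S"
        using Qnn Sneg by (simp add: field_simps)
      finally show ?thesis .
    qed
    define v where "v = mix t u u0"
    have vU: "v \<in> U" unfolding v_def using mixU t0 t1 uU u0 by auto
    have fv: "f k v = f k u0 + t * (f k u - f k u0)" if "k \<in> K" for k
      unfolding v_def using mixf[OF that _ t1 uU u0(1)] t0 by (simp add: algebra_simps)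
    have "G v = (\<Sum>k\<in>K. (max 0 (f k u0 + t * (f k u - f k u0)))\<^sup>2)"
      unfolding G_def by (intro sum.cong) (auto simp: fv)
    also have "\<dots> \<le> (\<Sum>k\<in>K. (a k)\<^sup>2 + 2 * a k * (t * (f k u - f k u0)) + (t * (f k u - f k u0))\<^sup>2)"
      unfolding a_def by (intro sum_mono sq_pos_part_ineq)
    also have "\<dots> = G u0 + t * (2 * S + t * Q)"
    proof -
      have e1: "(\<Sum>k\<in>K. 2 * a k * (t * (f k u - f k u0))) = (2 * t) * S"
        unfolding S_def sum_distrib_left by (rule sum.cong) (auto simp: algebra_simps)
      have e2: "(\<Sum>k\<in>K. (t * (f k u - f k u0))\<^sup>2) = t\<^sup>2 * Q"
        unfolding Q_def sum_distrib_left by (rule sum.cong) (auto simp: power_mult_distrib)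
      show ?thesis unfolding sum.distrib e1 e2
        by (simp add: G_def a_def power2_eq_square algebra_simps)
    qed
    also have "\<dots> < G u0"
    proof -
      have "2 * S + t * Q < 0" using tQ Sneg by linarith
      then have "t * (2 * S + t * Q) < 0" using t0 by (simp add: mult_pos_neg)
      then show ?thesis by simp
    qed
    finally show False using u0(2)[OF vU] by simp
  qed
  define s where "s = (\<Sum>k\<in>K. a k)"
  have spos: "s > 0"
  proof -
    have "s \<ge> a k0" unfolding s_def by (rule member_le_sum) (use k0 fK a_nn in auto)
    then show ?thesis using k0 by (simp add: a_def)
  qed
  show ?thesis
  proof (intro exI[of _ "\<lambda>k. a k / s"] conjI ballI)
    show "0 \<le> a k / s" for k using a_nn spos by simp
    show "(\<Sum>k\<in>K. a k / s) = 1" using spos by (simp add: s_def sum_divide_distrib[symmetric])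
    fix u assume uU: "u \<in> U"
    have "(\<Sum>k\<in>K. a k * f k u) = (\<Sum>k\<in>K. a k * f k u0) + (\<Sum>k\<in>K. a k * (f k u - f k u0))"
      by (simp add: sum.distrib[symmetric] algebra_simps)
    then have "(\<Sum>k\<in>K. a k * f k u) > 0" using key[OF uU] pos by linarith
    then have "(\<Sum>k\<in>K. a k * f k u) / s > 0" using spos by simp
    then show "(\<Sum>k\<in>K. a k / s * f k u) > 0"
      by (simp add: sum_divide_distrib)
  qed
qed



lemma divsum:
  fixes w :: "'v::finite \<Rightarrow> 'v \<Rightarrow> real"
  assumes ws: "\<And>x y. w x y = w y x"
  shows "(\<Sum>x\<in>UNIV. v x * divw w \<phi> x) = (1/2) * (\<Sum>x\<in>UNIV. \<Sum>y\<in>UNIV. w x y * \<phi> x y * (v x - v y))"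
proof -
  have "(\<Sum>x\<in>UNIV. v x * divw w \<phi> x) = (1/2) * ((\<Sum>x\<in>UNIV. \<Sum>y\<in>UNIV. w x y * \<phi> x y * v x)
      - (\<Sum>x\<in>UNIV. \<Sum>y\<in>UNIV. w x y * \<phi> y x * v x))"
    unfolding divw_def by (simp add: sum_distrib_left sum_subtractf[symmetric] algebra_simps)
  also have "(\<Sum>x\<in>UNIV. \<Sum>y\<in>UNIV. w x y * \<phi> y x * v x) = (\<Sum>x\<in>UNIV. \<Sum>y\<in>UNIV. w x y * \<phi> x y * v y)"
    by (subst sum.swap) (simp add: ws)
  finally show ?thesis
    by (simp add: sum_subtractf[symmetric] algebra_simps)
qed

lemma divsum_le:
  fixes w :: "'v::finite \<Rightarrow> 'v \<Rightarrow> real"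
  assumes ws: "\<And>x y. w x y = w y x" and wn: "\<And>x y. w x y \<ge> 0"
    and q1: "\<And>x y. \<bar>\<phi> x y\<bar> \<le> 1"
  shows "(\<Sum>x\<in>UNIV. v x * divw w \<phi> x) \<le> TVw w v"
proof -
  have "w x y * \<phi> x y * (v x - v y) \<le> w x y * \<bar>v y - v x\<bar>" for x y
  proof -
    have "\<phi> x y * (v x - v y) \<le> \<bar>\<phi> x y * (v x - v y)\<bar>" by simp
    also have "\<dots> = \<bar>\<phi> x y\<bar> * \<bar>v y - v x\<bar>" by (simp add: abs_mult abs_minus_commute)
    also have "\<dots> \<le> \<bar>v y - v x\<bar>" using q1[of x y] by (simp add: mult_left_le_one_le)
    finally show ?thesis using wn[of x y] by (simp add: mult.assoc mult_left_mono)
  qed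
  then show ?thesis unfolding divsum[OF ws] TVw_def
    by (intro mult_left_mono sum_mono) auto
qed

definition sgnq :: "('v \<Rightarrow> real) \<Rightarrow> 'v \<Rightarrow> 'v \<Rightarrow> real" where
  "sgnq v x y = (if v y \<le> v x then 1 else -1)"

lemma divsum_eq:
  fixes w :: "'v::finite \<Rightarrow> 'v \<Rightarrow> real"
  assumes ws: "\<And>x y. w x y = w y x"
  shows "(\<Sum>x\<in>UNIV. v x * divw w (sgnq v) x) = TVw w v"
  unfolding divsum[OF ws] TVw_def
  by (intro arg_cong[where f="\<lambda>t. (1/2) * t"] sum.cong refl) (auto simp: sgnq_def)

lemma Lagr_expand:
  "Lagr n w C Sl Su u q r1 r2 = (\<Sum>i\<in>{1..n}. \<Sum>x\<in>UNIV. C i x * u i x)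
     + (\<Sum>i\<in>{1..n}. \<Sum>x\<in>UNIV. u i x * divw w (q i) x)
     + (\<Sum>i\<in>{1..n}. r2 i * (usize (u i) - real (Su i)) + r1 i * (real (Sl i) - usize (u i)))"
proof -
  have e: "(\<Sum>x\<in>UNIV. u i x * coef w C q r1 r2 i x) = (\<Sum>x\<in>UNIV. C i x * u i x)
     + (\<Sum>x\<in>UNIV. u i x * divw w (q i) x) + r2 i * usize (u i) - r1 i * usize (u i)" for i
    unfolding coef_def usize_def
    by (simp add: algebra_simps sum.distrib sum_distrib_left sum_subtractf)
  show ?thesis unfolding Lagr_def e
    by (simp add: sum.distrib[symmetric] sum_subtractf[symmetric] algebra_simps)
qed

definition Pmax :: "real \<Rightarrow> nat \<Rightarrow> nat \<Rightarrow> real \<Rightarrow> real \<Rightarrow> real \<Rightarrow> real" where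
  "Pmax g sl su s r1 r2 = r2 * (s - real su) + r1 * (real sl - s)"

lemma pen_le:
  assumes "0 \<le> r1" "r1 \<le> g" "0 \<le> r2" "r2 \<le> g" "sl \<le> su"
  shows "r2 * (s - real su) + r1 * (real sl - s) \<le> Pgam g sl su s"
proof -
  have slsu: "real sl \<le> real su" using assms(5) by simp
  consider "s > real su" | "s < real sl" | "real sl \<le> s" "s \<le> real su" by linarith
  then show ?thesis
  proof cases
    case 1
    have "r2 * (s - real su) \<le> g * (s - real su)" using 1 assms by (intro mult_right_mono) auto
    moreover have "r1 * (real sl - s) \<le> 0" using 1 slsu assms by (intro mult_nonneg_nonpos) auto
    moreover have "Pgam g sl su s = g * (s - real su)" using 1 by (simp add: Pgam_def)
    ultimately show ?thesis by linarith
  next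
    case 2
    have "r1 * (real sl - s) \<le> g * (real sl - s)" using 2 assms by (intro mult_right_mono) auto
    moreover have "r2 * (s - real su) \<le> 0" using 2 slsu assms by (intro mult_nonneg_nonpos) auto
    moreover have "Pgam g sl su s = g * (real sl - s)" using 2 slsu by (simp add: Pgam_def)
    ultimately show ?thesis by linarith
  next
    case 3
    have "r1 * (real sl - s) \<le> 0" using 3 assms by (intro mult_nonneg_nonpos) auto
    moreover have "r2 * (s - real su) \<le> 0" using 3 assms by (intro mult_nonneg_nonpos) auto
    moreover have "Pgam g sl su s = 0" using 3 by (simp add: Pgam_def)
    ultimately show ?thesis by linarith
  qed
qed

lemma pen_eq:
  assumes "sl \<le> su"
  shows "(if s > real su then g else 0) * (s - real su) + (if s < real sl then g else 0) * (real sl - s)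
     = Pgam g sl su s"
  using assms by (auto simp: Pgam_def)

lemma pen_le_inf:
  assumes "0 \<le> r1" "0 \<le> r2" "real sl \<le> s" "s \<le> real su"
  shows "r2 * (s - real su) + r1 * (real sl - s) \<le> 0"
proof -
  have "r1 * (real sl - s) \<le> 0" using assms by (intro mult_nonneg_nonpos) auto
  moreover have "r2 * (s - real su) \<le> 0" using assms by (intro mult_nonneg_nonpos) auto
  ultimately show ?thesis by simp
qed




type_synonym ('a) dtrip = "(nat \<Rightarrow> 'a \<Rightarrow> 'a \<Rightarrow> real) \<times> (nat \<Rightarrow> real) \<times> (nat \<Rightarrow> real)"

lemma convex_sum_Icc:
  fixes a lam :: "'k \<Rightarrow> real"
  assumes "finite K" "\<And>k. k \<in> K \<Longrightarrow> lam k \<ge> 0" "(\<Sum>k\<in>K. lam k) = 1"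
    "\<And>k. k \<in> K \<Longrightarrow> lo \<le> a k \<and> a k \<le> hi"
  shows "lo \<le> (\<Sum>k\<in>K. lam k * a k) \<and> (\<Sum>k\<in>K. lam k * a k) \<le> hi"
proof
  have "lo = (\<Sum>k\<in>K. lam k * lo)" using assms(3) by (simp add: sum_distrib_right[symmetric])
  also have "\<dots> \<le> (\<Sum>k\<in>K. lam k * a k)" using assms by (intro sum_mono mult_left_mono) auto
  finally show "lo \<le> (\<Sum>k\<in>K. lam k * a k)" .
  have "(\<Sum>k\<in>K. lam k * a k) \<le> (\<Sum>k\<in>K. lam k * hi)" using assms by (intro sum_mono mult_left_mono) auto
  also have "\<dots> = hi" using assms(3) by (simp add: sum_distrib_right[symmetric])
  finally show "(\<Sum>k\<in>K. lam k * a k) \<le> hi" .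
qed

lemma finite_ext:
  assumes "finite I" "finite T"
  shows "finite {f :: nat \<Rightarrow> 'b. (\<forall>i. i \<notin> I \<longrightarrow> f i = z) \<and> (\<forall>i\<in>I. f i \<in> T)}"
proof (rule finite_subset)
  show "{f :: nat \<Rightarrow> 'b. (\<forall>i. i \<notin> I \<longrightarrow> f i = z) \<and> (\<forall>i\<in>I. f i \<in> T)}
     \<subseteq> (\<lambda>g i. if i \<in> I then g i else z) ` (Pi\<^sub>E I (\<lambda>_. T))"
  proof
    fix f assume f: "f \<in> {f :: nat \<Rightarrow> 'b. (\<forall>i. i \<notin> I \<longrightarrow> f i = z) \<and> (\<forall>i\<in>I. f i \<in> T)}"
    then have "f = (\<lambda>i. if i \<in> I then restrict f I i else z)" by (auto simp: fun_eq_iff)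
    moreover have "restrict f I \<in> Pi\<^sub>E I (\<lambda>_. T)" using f by auto
    ultimately show "f \<in> (\<lambda>g i. if i \<in> I then g i else z) ` (Pi\<^sub>E I (\<lambda>_. T))" by blast
  qed
  show "finite ((\<lambda>g i. if i \<in> I then g i else z) ` (Pi\<^sub>E I (\<lambda>_. T)))"
    using assms by (intro finite_imageI finite_PiE) auto
qed

lemma Min_shift:
  fixes f :: "'a \<Rightarrow> real"
  assumes "finite I" "I \<noteq> {}"
  shows "Min ((\<lambda>i. f i - s) ` I) = Min (f ` I) - s"
proof -
  have "mono (\<lambda>t::real. t - s)" by (auto simp: mono_def)
  then have "Min ((\<lambda>t. t - s) ` (f ` I)) = Min (f ` I) - s"
    using assms by (intro mono_Min_commute[symmetric]) auto
  then show ?thesis by (simp add: image_image)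
qed

lemma lin_ge:
  fixes r1 r2 sl su :: real
  assumes "0 \<le> r1" "0 \<le> r2" "sl \<le> su"
  shows "r1 * sl - r2 * su \<le> max 0 (r1 - r2) * sl - max 0 (r2 - r1) * su"
proof (cases "r1 \<le> r2")
  case True
  have "r1 * sl \<le> r1 * su" using assms by (intro mult_left_mono) auto
  then show ?thesis using True by (simp add: max_def algebra_simps)
next
  case False
  have "r2 * sl \<le> r2 * su" using assms by (intro mult_left_mono) auto
  then show ?thesis using False by (simp add: max_def algebra_simps)
qed

lemma h_anti:
  fixes t1 t sl su :: real
  assumes "t1 \<le> t" "0 \<le> sl" "0 \<le> su"
  shows "max 0 (- t) * sl - max 0 t * su \<le> max 0 (- t1) * sl - max 0 t1 * su"
proof -
  have "max 0 (- t) * sl \<le> max 0 (- t1) * sl" using assms by (intro mult_right_mono) auto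
  moreover have "max 0 t1 * su \<le> max 0 t * su" using assms by (intro mult_right_mono) auto
  ultimately show ?thesis by linarith
qed

lemma sum_split_sum:
  fixes g :: "'a + (nat \<times> bool) \<Rightarrow> real"
  assumes "finite Q" "finite I"
  shows "(\<Sum>k\<in>Inl ` Q \<union> Inr ` (I \<times> UNIV). g k) = (\<Sum>q\<in>Q. g (Inl q)) + (\<Sum>i\<in>I. g (Inr (i, True)) + g (Inr (i, False)))"
proof -
  have "(\<Sum>k\<in>Inl ` Q \<union> Inr ` (I \<times> UNIV). g k) = (\<Sum>k\<in>Inl ` Q. g k) + (\<Sum>k\<in>Inr ` (I \<times> UNIV). g k)"
    using assms by (intro sum.union_disjoint) auto
  also have "(\<Sum>k\<in>Inl ` Q. g k) = (\<Sum>q\<in>Q. g (Inl q))" by (simp add: sum.reindex)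
  also have "(\<Sum>k\<in>Inr ` (I \<times> UNIV). g k) = (\<Sum>ib\<in>I \<times> UNIV. g (Inr ib))" by (simp add: sum.reindex)
  also have "\<dots> = (\<Sum>i\<in>I. \<Sum>b\<in>UNIV. g (Inr (i, b)))" by (simp add: sum.cartesian_product)
  also have "\<dots> = (\<Sum>i\<in>I. g (Inr (i, True)) + g (Inr (i, False)))" by (simp add: UNIV_bool add.commute)
  finally show ?thesis .
qed

lemma bin_rel: "inBbin n u \<Longrightarrow> inBrel n u"
proof -
  assume b: "inBbin n u"
  have "0 \<le> u i x \<and> u i x \<le> 1" if "i \<in> {1..n}" for i x
  proof -
    have "u i x \<in> {0, 1}" using b that by (simp add: inBbin_def)
    then show ?thesis by auto
  qed
  then show ?thesis using b by (simp add: inBrel_def inBbin_def)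
qed

context
  fixes n :: nat and w :: "'v::finite \<Rightarrow> 'v \<Rightarrow> real" and C :: "nat \<Rightarrow> 'v \<Rightarrow> real"
    and Sl Su :: "nat \<Rightarrow> nat" and \<gamma> :: ereal
  assumes w_nn: "\<And>x y. w x y \<ge> 0" and w_sym: "\<And>x y. w x y = w y x" and n1: "n \<ge> 1"
    and S_le: "\<And>i. i \<in> {1..n} \<Longrightarrow> Sl i \<le> Su i"
    and gam: "\<gamma> \<ge> 0"
    and S_sum1: "(\<Sum>i\<in>{1..n}. Sl i) \<le> CARD('v)" and S_sum2: "CARD('v) \<le> (\<Sum>i\<in>{1..n}. Su i)"
begin

definition "Gm = (if \<gamma> = \<infinity> then 0 else real_of_ereal \<gamma>)"

lemma Gm_nn: "Gm \<ge> 0"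
  unfolding Gm_def using gam by (cases \<gamma>) auto

lemma Gm_le: "ereal Gm \<le> \<gamma>"
  unfolding Gm_def using gam by (cases \<gamma>) auto

lemma feas_le_Gm: "\<gamma> \<noteq> \<infinity> \<Longrightarrow> ereal r \<le> \<gamma> \<Longrightarrow> r \<le> Gm"
  unfolding Gm_def using gam by (cases \<gamma>) auto

lemma weak_b:
  assumes sz: "size_ok n Sl Su \<gamma> u" and df: "dual_feas n \<gamma> q r1 r2"
  shows "Lagr n w C Sl Su u q r1 r2 \<le> energy n w C Sl Su \<gamma> u"
proof -
  have t1: "(\<Sum>i\<in>{1..n}. \<Sum>x\<in>UNIV. u i x * divw w (q i) x) \<le> (\<Sum>i\<in>{1..n}. TVw w (u i))"
    using df by (intro sum_mono divsum_le w_sym w_nn) (auto simp: dual_feas_def)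
  have t2: "(\<Sum>i\<in>{1..n}. r2 i * (usize (u i) - real (Su i)) + r1 i * (real (Sl i) - usize (u i)))
      \<le> (if \<gamma> = \<infinity> then 0 else (\<Sum>i\<in>{1..n}. Pgam (real_of_ereal \<gamma>) (Sl i) (Su i) (usize (u i))))"
  proof (cases "\<gamma> = \<infinity>")
    case True
    then show ?thesis using sz df
      by (auto simp: size_ok_def dual_feas_def intro!: sum_nonpos pen_le_inf)
  next
    case False
    have "r2 i * (usize (u i) - real (Su i)) + r1 i * (real (Sl i) - usize (u i))
       \<le> Pgam (real_of_ereal \<gamma>) (Sl i) (Su i) (usize (u i))" if i: "i \<in> {1..n}" for i
    proof (rule pen_le)
      show "0 \<le> r1 i" "0 \<le> r2 i" using df i by (auto simp: dual_feas_def)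
      show "r1 i \<le> real_of_ereal \<gamma>" "r2 i \<le> real_of_ereal \<gamma>"
        using df i feas_le_Gm[OF False] False by (auto simp: dual_feas_def Gm_def)
      show "Sl i \<le> Su i" using S_le i .
    qed
    then show ?thesis using False by (auto intro: sum_mono)
  qed
  show ?thesis unfolding Lagr_expand energy_def
    using t1 t2 by (simp add: mult.commute)
qed

definition "qv u = (\<lambda>i x y. if i \<in> {1..n} then sgnq (u i) x y else 0)"
definition "r1v u = (\<lambda>i. if i \<in> {1..n} \<and> usize (u i) < real (Sl i) then Gm else 0)"
definition "r2v u = (\<lambda>i. if i \<in> {1..n} \<and> usize (u i) > real (Su i) then Gm else 0)"

lemma vert_feas: "dual_feas n \<gamma> (qv u) (r1v u) (r2v u)"
  using Gm_nn Gm_le gam by (auto simp: dual_feas_def qv_def r1v_def r2v_def sgnq_def zero_ereal_def)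

lemma vert_eq: "Lagr n w C Sl Su u (qv u) (r1v u) (r2v u) = energy n w C Sl Su \<gamma> u"
proof -
  have t1: "(\<Sum>i\<in>{1..n}. \<Sum>x\<in>UNIV. u i x * divw w (qv u i) x) = (\<Sum>i\<in>{1..n}. TVw w (u i))"
    by (intro sum.cong refl) (auto simp: qv_def divsum_eq[OF w_sym])
  have t2: "(\<Sum>i\<in>{1..n}. r2v u i * (usize (u i) - real (Su i)) + r1v u i * (real (Sl i) - usize (u i)))
      = (if \<gamma> = \<infinity> then 0 else (\<Sum>i\<in>{1..n}. Pgam (real_of_ereal \<gamma>) (Sl i) (Su i) (usize (u i))))"
  proof (cases "\<gamma> = \<infinity>")
    case True
    show ?thesis unfolding r1v_def r2v_def Gm_def using True by simp
  next
    case False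
    show ?thesis unfolding r1v_def r2v_def Gm_def using False
      by (auto simp: pen_eq[OF S_le] intro!: sum.cong)
  qed
  show ?thesis unfolding Lagr_expand energy_def
    using t1 t2 by (simp add: mult.commute)
qed


abbreviation "mc q r1 r2 x \<equiv> Min ((\<lambda>j. coef w C q r1 r2 j x) ` {1..n})"

lemma mc_le: "i \<in> {1..n} \<Longrightarrow> mc q r1 r2 x \<le> coef w C q r1 r2 i x"
  by (intro Min_le) auto

lemma Imin_ne: "\<exists>i. i \<in> Imin n w C q r1 r2 x"
proof -
  have "mc q r1 r2 x \<in> (\<lambda>j. coef w C q r1 r2 j x) ` {1..n}"
    using n1 by (intro Min_in) auto
  then show ?thesis unfolding Imin_def by auto
qed

definition "pick q r1 r2 x = (SOME i. i \<in> Imin n w C q r1 r2 x)"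

lemma pick: "pick q r1 r2 x \<in> Imin n w C q r1 r2 x"
  unfolding pick_def using Imin_ne by (rule someI_ex)

lemma pick_in: "pick q r1 r2 x \<in> {1..n}" and pick_eq: "coef w C q r1 r2 (pick q r1 r2 x) x = mc q r1 r2 x"
  using pick[of q r1 r2 x] by (auto simp: Imin_def)

definition "uam q r1 r2 = (\<lambda>i x. if i = pick q r1 r2 x then 1 else 0 :: real)"

lemma uam_inBrel: "inBrel n (uam q r1 r2)"
  using pick_in by (auto simp: inBrel_def uam_def)

lemma uam_L: "Lagr n w C Sl Su (uam q r1 r2) q r1 r2 = dual_obj n w C Sl Su q r1 r2"
proof -
  have "(\<Sum>i\<in>{1..n}. \<Sum>x\<in>UNIV. uam q r1 r2 i x * coef w C q r1 r2 i x)
      = (\<Sum>x\<in>UNIV. \<Sum>i\<in>{1..n}. uam q r1 r2 i x * coef w C q r1 r2 i x)"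
    by (rule sum.swap)
  also have "\<dots> = (\<Sum>x\<in>UNIV. mc q r1 r2 x)"
  proof (intro sum.cong refl)
    fix x
    have "(\<Sum>i\<in>{1..n}. uam q r1 r2 i x * coef w C q r1 r2 i x)
       = (\<Sum>i\<in>{1..n}. if i = pick q r1 r2 x then coef w C q r1 r2 i x else 0)"
      by (intro sum.cong) (auto simp: uam_def)
    also have "\<dots> = mc q r1 r2 x" using pick_in pick_eq by (simp add: sum.delta)
    finally show "(\<Sum>i\<in>{1..n}. uam q r1 r2 i x * coef w C q r1 r2 i x) = mc q r1 r2 x" .
  qed
  finally show ?thesis unfolding Lagr_def dual_obj_def by simp
qed

lemma pt_ge: "inBrel n u \<Longrightarrow> mc q r1 r2 x \<le> (\<Sum>i\<in>{1..n}. u i x * coef w C q r1 r2 i x)"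
proof -
  assume u: "inBrel n u"
  have "mc q r1 r2 x = (\<Sum>i\<in>{1..n}. u i x * mc q r1 r2 x)"
    using u by (simp add: inBrel_def sum_distrib_right[symmetric])
  also have "\<dots> \<le> (\<Sum>i\<in>{1..n}. u i x * coef w C q r1 r2 i x)"
    using u mc_le by (intro sum_mono mult_left_mono) (auto simp: inBrel_def)
  finally show ?thesis .
qed

lemma weak_a: "inBrel n u \<Longrightarrow> dual_obj n w C Sl Su q r1 r2 \<le> Lagr n w C Sl Su u q r1 r2"
proof -
  assume u: "inBrel n u"
  have "(\<Sum>x\<in>UNIV. mc q r1 r2 x) \<le> (\<Sum>x\<in>UNIV. \<Sum>i\<in>{1..n}. u i x * coef w C q r1 r2 i x)"
    by (rule sum_mono) (rule pt_ge[OF u])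
  also have "\<dots> = (\<Sum>i\<in>{1..n}. \<Sum>x\<in>UNIV. u i x * coef w C q r1 r2 i x)"
    by (rule sum.swap)
  finally show ?thesis unfolding Lagr_def dual_obj_def by simp
qed

lemma partA:
  assumes u: "inBrel n u" and mn: "\<forall>u'. inBrel n u' \<longrightarrow> Lagr n w C Sl Su u q r1 r2 \<le> Lagr n w C Sl Su u' q r1 r2"
  shows "(\<Sum>i\<in>Imin n w C q r1 r2 x. u i x) = 1 \<and>
         (\<forall>j\<in>{1..n}. j \<notin> Imin n w C q r1 r2 x \<longrightarrow> u j x = 0)"
proof -
  define D where "D x = (\<Sum>i\<in>{1..n}. u i x * coef w C q r1 r2 i x) - mc q r1 r2 x" for x
  have Dnn: "D x \<ge> 0" for x using pt_ge[OF u] by (simp add: D_def)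
  have "Lagr n w C Sl Su u q r1 r2 \<le> dual_obj n w C Sl Su q r1 r2"
  proof -
    have "Lagr n w C Sl Su u q r1 r2 \<le> Lagr n w C Sl Su (uam q r1 r2) q r1 r2"
      using mn uam_inBrel by blast
    then show ?thesis using uam_L by simp
  qed
  moreover have "Lagr n w C Sl Su u q r1 r2 - dual_obj n w C Sl Su q r1 r2 = (\<Sum>x\<in>UNIV. D x)"
  proof -
    have "(\<Sum>i\<in>{1..n}. \<Sum>x\<in>UNIV. u i x * coef w C q r1 r2 i x)
      = (\<Sum>x\<in>UNIV. \<Sum>i\<in>{1..n}. u i x * coef w C q r1 r2 i x)"
      by (rule sum.swap)
    then show ?thesis unfolding Lagr_def dual_obj_def D_def sum_subtractf by simp
  qed
  ultimately have "(\<Sum>x\<in>UNIV. D x) \<le> 0" by simp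
  moreover have "(\<Sum>x\<in>UNIV. D x) \<ge> 0" using Dnn by (simp add: sum_nonneg)
  ultimately have s0: "(\<Sum>x\<in>UNIV. D x) = 0" by linarith
  have D0: "D x = 0" for x
    using sum_nonneg_eq_0_iff[of UNIV D] Dnn s0 by simp
  have "D x = (\<Sum>i\<in>{1..n}. u i x * (coef w C q r1 r2 i x - mc q r1 r2 x))"
    using u by (simp add: D_def inBrel_def right_diff_distrib sum_subtractf sum_distrib_right[symmetric])
  then have "(\<Sum>i\<in>{1..n}. u i x * (coef w C q r1 r2 i x - mc q r1 r2 x)) = 0" using D0 by simp
  moreover have "\<forall>i\<in>{1..n}. u i x * (coef w C q r1 r2 i x - mc q r1 r2 x) \<ge> 0"
    using u mc_le by (auto simp: inBrel_def)
  ultimately have z: "\<forall>i\<in>{1..n}. u i x * (coef w C q r1 r2 i x - mc q r1 r2 x) = 0"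
    using sum_nonneg_eq_0_iff[of "{1..n}" "\<lambda>i. u i x * (coef w C q r1 r2 i x - mc q r1 r2 x)"]
    by blast
  have zz: "\<forall>j\<in>{1..n}. j \<notin> Imin n w C q r1 r2 x \<longrightarrow> u j x = 0"
  proof (intro ballI impI)
    fix j assume j: "j \<in> {1..n}" "j \<notin> Imin n w C q r1 r2 x"
    then have "coef w C q r1 r2 j x - mc q r1 r2 x \<noteq> 0" by (auto simp: Imin_def)
    then show "u j x = 0" using z j by auto
  qed
  have sub: "Imin n w C q r1 r2 x \<subseteq> {1..n}" by (auto simp: Imin_def)
  have "(\<Sum>i\<in>{1..n}. u i x) = (\<Sum>i\<in>Imin n w C q r1 r2 x. u i x)"
    using zz sub by (intro sum.mono_neutral_right) auto
  then show ?thesis using u zz by (simp add: inBrel_def)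
qed


definition "bx i = (if i \<in> {1..n} then {0..1} else {0::real})"

definition "U0 = {u::nat \<Rightarrow> 'v \<Rightarrow> real. (\<forall>i x. u i x \<in> bx i) \<and>
                    (\<forall>x. (\<Sum>i\<in>{1..n}. u i x) = 1)}"

definition "F0 = U0 \<inter> {u::nat \<Rightarrow> 'v \<Rightarrow> real. size_ok n Sl Su \<gamma> u}"

lemma cont_usize [continuous_intros]: "continuous_on S (\<lambda>u::nat \<Rightarrow> 'v \<Rightarrow> real. usize (u i))"
  unfolding usize_def by (intro continuous_intros)

lemma cont_Lagr_u [continuous_intros]: "continuous_on S (\<lambda>u. Lagr n w C Sl Su u q r1 r2)"
  unfolding Lagr_def by (intro continuous_intros)

lemma compact_U0: "compact U0"
proof -
  have e: "U0 = (Pi\<^sub>E UNIV (\<lambda>i. Pi\<^sub>E UNIV (\<lambda>x. bx i)))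
      \<inter> (\<Inter>x. {u. (\<Sum>i\<in>{1..n}. u i x) = 1})"
    by (auto simp: U0_def PiE_iff)
  have c1: "compact (Pi\<^sub>E UNIV (\<lambda>i. Pi\<^sub>E UNIV (\<lambda>x. bx i)))"
    by (intro compact_PiE_UNIV) (auto simp: bx_def)
  have c2: "closed (\<Inter>x::'v. {u::nat \<Rightarrow> 'v \<Rightarrow> real. (\<Sum>i\<in>{1..n}. u i x) = 1})"
    by (intro closed_INT ballI closed_Collect_eq continuous_intros)
  show ?thesis unfolding e using c1 c2 by (intro compact_Int_closed)
qed

lemma compact_F0: "compact F0"
proof -
  have e: "{u::nat \<Rightarrow> 'v \<Rightarrow> real. size_ok n Sl Su \<gamma> u} = (if \<gamma> = \<infinity> then (\<Inter>i\<in>{1..n}. {u::nat \<Rightarrow> 'v \<Rightarrow> real. real (Sl i) \<le> usize (u i)} \<inter> {u. usize (u i) \<le> real (Su i)}) else UNIV)"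
    by (auto simp: size_ok_def)
  have c: "closed (\<Inter>i\<in>{1..n}. {u::nat \<Rightarrow> 'v \<Rightarrow> real. real (Sl i) \<le> usize (u i)} \<inter> {u::nat \<Rightarrow> 'v \<Rightarrow> real. usize (u i) \<le> real (Su i)})"
    by (intro closed_INT ballI closed_Int closed_Collect_le continuous_intros)
  have "closed {u::nat \<Rightarrow> 'v \<Rightarrow> real. size_ok n Sl Su \<gamma> u}" unfolding e using c by auto
  then show ?thesis unfolding F0_def using compact_U0 by (simp add: compact_Int_closed)
qed

lemma U0_inBrel: "u \<in> U0 \<Longrightarrow> inBrel n u"
  unfolding U0_def inBrel_def bx_def by (metis (mono_tags, lifting) atLeastAtMost_iff mem_Collect_eq)

definition "nz (u::nat \<Rightarrow> 'v \<Rightarrow> real) = (\<lambda>i. if i \<in> {1..n} then u i else (\<lambda>_. 0::real))"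

lemma nz_U0: "inBrel n u \<Longrightarrow> nz u \<in> U0"
  by (auto simp: U0_def inBrel_def nz_def bx_def)

lemma nz_Lagr: "Lagr n w C Sl Su (nz u) q r1 r2 = Lagr n w C Sl Su u q r1 r2"
  unfolding Lagr_def nz_def by (intro arg_cong2[where f="(+)"] sum.cong refl) auto

lemma nz_energy: "energy n w C Sl Su \<gamma> (nz u) = energy n w C Sl Su \<gamma> u"
  unfolding energy_def nz_def
  by (intro arg_cong2[where f="(+)"] sum.cong refl if_cong) auto

lemma nz_size: "size_ok n Sl Su \<gamma> (nz u) = size_ok n Sl Su \<gamma> u"
  unfolding size_ok_def nz_def by auto

definition "mixu t u v = (\<lambda>i x. t * u i x + (1 - t) * v i x)"

lemma mixu_U0: "0 \<le> t \<Longrightarrow> t \<le> 1 \<Longrightarrow> u \<in> U0 \<Longrightarrow> v \<in> U0 \<Longrightarrow> mixu t u v \<in> U0"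
proof -
  assume t: "0 \<le> t" "t \<le> 1" and u: "u \<in> U0" and v: "v \<in> U0"
  have a: "mixu t u v i x \<in> bx i" for i x
  proof (cases "i \<in> {1..n}")
    case True
    then have "u i x \<in> {0..1}" "v i x \<in> {0..1}" using u v by (auto simp: U0_def bx_def dest: spec[of _ i])
    then have "t * u i x \<le> t" "(1 - t) * v i x \<le> (1 - t)" "0 \<le> t * u i x" "0 \<le> (1 - t) * v i x"
      using t by (auto intro!: mult_right_le_one_le)
    then have "0 \<le> t * u i x + (1 - t) * v i x" "t * u i x + (1 - t) * v i x \<le> 1" by linarith+
    then show ?thesis using True by (simp add: mixu_def bx_def)
  next
    case False
    have "u i x \<in> bx i" "v i x \<in> bx i" using u v by (auto simp: U0_def)
    then have "u i x = 0" "v i x = 0" using False by (auto simp: bx_def)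
    then show ?thesis using False by (simp add: mixu_def bx_def)
  qed
  have b: "(\<Sum>i\<in>{1..n}. mixu t u v i x) = 1" for x
    using u v by (simp add: mixu_def sum.distrib sum_distrib_left[symmetric] U0_def)
  show ?thesis using a b by (simp add: U0_def)
qed

lemma mixu_Lagr: "Lagr n w C Sl Su (mixu t u v) q r1 r2 = t * Lagr n w C Sl Su u q r1 r2 + (1 - t) * Lagr n w C Sl Su v q r1 r2"
proof -
  have e: "(\<Sum>i\<in>{1..n}. \<Sum>x\<in>UNIV. mixu t u v i x * coef w C q r1 r2 i x)
    = t * (\<Sum>i\<in>{1..n}. \<Sum>x\<in>UNIV. u i x * coef w C q r1 r2 i x)
      + (1 - t) * (\<Sum>i\<in>{1..n}. \<Sum>x\<in>UNIV. v i x * coef w C q r1 r2 i x)"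
    unfolding mixu_def by (simp add: distrib_right sum.distrib sum_distrib_left mult.assoc)
  show ?thesis unfolding Lagr_def e by (simp add: algebra_simps)
qed

lemma mixu_usize: "usize (mixu t u v i) = t * usize (u i) + (1 - t) * usize (v i)"
  unfolding usize_def mixu_def by (simp add: sum.distrib sum_distrib_left)

lemma F0_ne: "F0 \<noteq> {}"
proof -
  define N where "N = real CARD('v)"
  define a where "a = real (\<Sum>i\<in>{1..n}. Sl i)"
  define b where "b = real (\<Sum>i\<in>{1..n}. Su i)"
  define th where "th = (if b = a then 0 else (N - a) / (b - a))"
  define t where "t i = real (Sl i) + th * (real (Su i) - real (Sl i))" for i
  have Npos: "N > 0" by (simp add: N_def)
  have aN: "a \<le> N" unfolding a_def N_def of_nat_le_iff by (rule S_sum1)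
  have Nb: "N \<le> b" unfolding b_def N_def of_nat_le_iff by (rule S_sum2)
  have th: "0 \<le> th" "th \<le> 1" using aN Nb by (auto simp: th_def field_simps)
  have t_rng: "real (Sl i) \<le> t i" "t i \<le> real (Su i)" if "i \<in> {1..n}" for i
  proof -
    have "real (Sl i) \<le> real (Su i)" using S_le[OF that] by simp
    moreover have "th * (real (Su i) - real (Sl i)) \<le> (real (Su i) - real (Sl i))"
      using th calculation by (intro mult_left_le_one_le) auto
    moreover have "0 \<le> th * (real (Su i) - real (Sl i))"
      using th calculation by (intro mult_nonneg_nonneg) auto
    ultimately show "real (Sl i) \<le> t i" "t i \<le> real (Su i)" unfolding t_def by linarith+
  qed
  have tsum: "(\<Sum>i\<in>{1..n}. t i) = N"
  proof -
    have "(\<Sum>i\<in>{1..n}. t i) = a + th * (b - a)"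
      unfolding t_def a_def b_def by (simp add: sum.distrib sum_distrib_left[symmetric] sum_subtractf)
    then show ?thesis using aN Nb by (auto simp: th_def)
  qed
  have tsum': "(\<Sum>i\<in>{Suc 0..n}. t i) = N" using tsum by simp
  have tnn: "t i \<ge> 0" if "i \<in> {1..n}" for i using t_rng[OF that] by linarith
  have tle: "t i \<le> N" if "i \<in> {1..n}" for i
    unfolding tsum[symmetric] using that tnn by (intro member_le_sum) auto
  define u where "u = (\<lambda>i (x::'v). if i \<in> {1..n} then t i / N else 0)"
  have "u \<in> U0"
    using tnn tle Npos by (auto simp: U0_def u_def bx_def sum_divide_distrib[symmetric] tsum')
  moreover have "usize (u i) = t i" if "i \<in> {1..n}" for i
    using that Npos by (simp add: usize_def u_def N_def)
  then have "size_ok n Sl Su \<gamma> u" using t_rng by (simp add: size_ok_def)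
  ultimately show ?thesis by (auto simp: F0_def)
qed


lemma relaxed_exists: "\<exists>u. u \<in> F0 \<and> relaxed_sol n w C Sl Su \<gamma> u"
proof -
  define DF where "DF = {d::'v dtrip. dual_feas n \<gamma> (fst d) (fst (snd d)) (snd (snd d))}"
  define T where "T u' = (\<Inter>d\<in>DF. {u. Lagr n w C Sl Su u (fst d) (fst (snd d)) (snd (snd d)) \<le> energy n w C Sl Su \<gamma> u'})" for u'
  have "F0 \<inter> (\<Inter>u'\<in>F0. T u') \<noteq> {}"
  proof (rule compact_imp_fip_image[OF compact_F0])
    show "closed (T i)" for i
      unfolding T_def by (intro closed_INT ballI closed_Collect_le continuous_intros)
    fix I' assume fI: "finite I'" and sI: "I' \<subseteq> F0"
    show "F0 \<inter> (\<Inter>i\<in>I'. T i) \<noteq> {}"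
    proof (cases "I' = {}")
      case True then show ?thesis using F0_ne by simp
    next
      case False
      define g where "g = arg_min_on (energy n w C Sl Su \<gamma>) I'"
      have g: "g \<in> I'" "\<And>x. x \<in> I' \<Longrightarrow> energy n w C Sl Su \<gamma> g \<le> energy n w C Sl Su \<gamma> x"
        using arg_min_if_finite[OF fI False, of "energy n w C Sl Su \<gamma>"] unfolding g_def
        by (auto simp: not_less)
      have gF: "g \<in> F0" using g sI by auto
      then have szg: "size_ok n Sl Su \<gamma> g" by (simp add: F0_def)
      have "g \<in> T i" if "i \<in> I'" for i
        unfolding T_def DF_def using weak_b[OF szg] g(2)[OF that] by (auto intro: order_trans)
      then show ?thesis using gF by auto
    qed
  qed
  then obtain u where u: "u \<in> F0" "\<And>u'. u' \<in> F0 \<Longrightarrow> u \<in> T u'" by auto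
  have "relaxed_sol n w C Sl Su \<gamma> u"
    unfolding relaxed_sol_def
  proof (intro conjI allI impI)
    show "inBrel n u" using u(1) by (simp add: F0_def U0_inBrel)
    show "size_ok n Sl Su \<gamma> u" using u(1) by (simp add: F0_def)
    fix u' :: "nat \<Rightarrow> 'v \<Rightarrow> real" assume u': "inBrel n u' \<and> size_ok n Sl Su \<gamma> u'"
    then have "nz u' \<in> F0" by (simp add: F0_def nz_U0 nz_size)
    then have "u \<in> T (nz u')" by (rule u(2))
    moreover have "(qv u, r1v u, r2v u) \<in> DF" by (simp add: DF_def vert_feas)
    ultimately have "Lagr n w C Sl Su u (qv u) (r1v u) (r2v u) \<le> energy n w C Sl Su \<gamma> (nz u')"
      unfolding T_def by force
    then show "energy n w C Sl Su \<gamma> u \<le> energy n w C Sl Su \<gamma> u'"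
      by (simp add: vert_eq nz_energy)
  qed
  then show ?thesis using u(1) by blast
qed


abbreviation "LL u (d::'v dtrip) \<equiv> Lagr n w C Sl Su u (fst d) (fst (snd d)) (snd (snd d))"
abbreviation "DD (d::'v dtrip) \<equiv> dual_obj n w C Sl Su (fst d) (fst (snd d)) (snd (snd d))"

lemma cont_LL: "continuous_on UNIV (\<lambda>d::'v dtrip. LL u d)"
  unfolding Lagr_def coef_def divw_def
  by (intro continuous_intros continuous_on_compose2[OF cont_coord3[of UNIV] continuous_on_fst]
    continuous_on_compose2[OF cont_coord1[of UNIV] continuous_on_fst]  continuous_on_compose2[OF cont_coord1[of UNIV] continuous_on_snd]
    continuous_on_compose2[OF cont_coord1[of UNIV] continuous_on_compose2[OF continuous_on_fst continuous_on_snd]]; simp?)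

lemma fip_dual:
  fixes DB :: "'v dtrip set"
  assumes cDB: "compact DB" and S1: "\<And>c. c < p \<Longrightarrow> \<exists>d\<in>DB. c < DD d"
  shows "\<exists>d\<in>DB. p \<le> DD d"
proof -
  define I where "I = {(u, c). inBrel n (u::nat \<Rightarrow> 'v \<Rightarrow> real) \<and> c < p}"
  define f where "f uc = {d::'v dtrip. snd uc \<le> LL (fst uc) d}" for uc
  have "DB \<inter> (\<Inter>i\<in>I. f i) \<noteq> {}"
  proof (rule compact_imp_fip_image[OF cDB])
    show "closed (f i)" for i
      unfolding f_def by (intro closed_Collect_le continuous_on_const cont_LL)
    fix I' assume fI: "finite I'" and sI: "I' \<subseteq> I"
    define c0 where "c0 = Max (insert (p - 1) (snd ` I'))"
    have "c0 \<in> insert (p - 1) (snd ` I')" unfolding c0_def using fI by (intro Max_in) auto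
    then have c0p: "c0 < p" using sI by (auto simp: I_def)
    obtain d where d: "d \<in> DB" "c0 < DD d" using S1[OF c0p] by blast
    have "d \<in> f i" if "i \<in> I'" for i
    proof -
      have "snd i \<le> c0" unfolding c0_def using fI that by (intro Max_ge) auto
      moreover have "DD d \<le> LL (fst i) d" using that sI by (intro weak_a) (auto simp: I_def)
      ultimately show ?thesis using d by (simp add: f_def)
    qed
    then show "DB \<inter> (\<Inter>i\<in>I'. f i) \<noteq> {}" using d by auto
  qed
  then obtain d where d: "d \<in> DB" "\<And>i. i \<in> I \<Longrightarrow> d \<in> f i" by auto
  let ?u = "uam (fst d) (fst (snd d)) (snd (snd d))"
  have "c \<le> DD d" if "c < p" for c
  proof -
    have "(?u, c) \<in> I" using that uam_inBrel by (simp add: I_def)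
    then have "c \<le> LL ?u d" using d(2) by (force simp: f_def)
    then show ?thesis by (simp add: uam_L)
  qed
  then have "p \<le> DD d"
    by (metis dense not_le)
  then show ?thesis using d(1) by blast
qed

definition "Lq u q = (\<Sum>i\<in>{1..n}. \<Sum>x\<in>UNIV. u i x * divw w (q i) x)"
definition "Lr u r1 r2 = (\<Sum>i\<in>{1..n}. r2 i * (usize (u i) - real (Su i)) + r1 i * (real (Sl i) - usize (u i)))"
definition "LA u = (\<Sum>i\<in>{1..n}. \<Sum>x\<in>UNIV. C i x * u i x)"

lemma Lagr_split: "Lagr n w C Sl Su u q r1 r2 = LA u + Lq u q + Lr u r1 r2"
  unfolding Lagr_expand LA_def Lq_def Lr_def by simp

lemma Lq_comb:
  assumes "finite K"
  shows "Lq u (\<lambda>i x y. \<Sum>k\<in>K. lam k * Q k i x y) = (\<Sum>k\<in>K. lam k * Lq u (Q k))"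
proof -
  have dv: "divw w (\<lambda>x y. \<Sum>k\<in>K. lam k * Q k i x y) x = (\<Sum>k\<in>K. lam k * divw w (Q k i) x)" for i x
  proof -
    have "divw w (\<lambda>x y. \<Sum>k\<in>K. lam k * Q k i x y) x
       = (1/2) * (\<Sum>y\<in>UNIV. \<Sum>k\<in>K. lam k * (w x y * (Q k i x y - Q k i y x)))"
      unfolding divw_def
      by (simp add: sum_distrib_left sum_subtractf[symmetric] algebra_simps)
    also have "\<dots> = (\<Sum>k\<in>K. lam k * divw w (Q k i) x)"
      unfolding divw_def by (subst sum.swap) (simp add: sum_distrib_left algebra_simps)
    finally show ?thesis .
  qed
  have "Lq u (\<lambda>i x y. \<Sum>k\<in>K. lam k * Q k i x y)
      = (\<Sum>i\<in>{1..n}. \<Sum>x\<in>UNIV. \<Sum>k\<in>K. lam k * (u i x * divw w (Q k i) x))"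
    unfolding Lq_def dv by (simp add: sum_distrib_left algebra_simps)
  also have "\<dots> = (\<Sum>k\<in>K. lam k * Lq u (Q k))"
    unfolding Lq_def sum_distrib_left
    by (subst sum.swap, rule sum.cong, rule refl, subst sum.swap, rule refl)
  finally show ?thesis .
qed

lemma Lr_comb:
  assumes "finite K"
  shows "Lr u (\<lambda>i. \<Sum>k\<in>K. lam k * R1 k i) (\<lambda>i. \<Sum>k\<in>K. lam k * R2 k i) = (\<Sum>k\<in>K. lam k * Lr u (R1 k) (R2 k))"
proof -
  have "Lr u (\<lambda>i. \<Sum>k\<in>K. lam k * R1 k i) (\<lambda>i. \<Sum>k\<in>K. lam k * R2 k i)
     = (\<Sum>i\<in>{1..n}. \<Sum>k\<in>K. lam k * (R2 k i * (usize (u i) - real (Su i)) + R1 k i * (real (Sl i) - usize (u i))))"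
    unfolding Lr_def by (intro sum.cong refl) (simp add: sum_distrib_right sum.distrib[symmetric] distrib_left mult.assoc)
  also have "\<dots> = (\<Sum>k\<in>K. lam k * Lr u (R1 k) (R2 k))"
    unfolding Lr_def sum_distrib_left by (rule sum.swap)
  finally show ?thesis .
qed

definition "comb K lam = (\<lambda>i x y. \<Sum>k\<in>K. lam k * fst k i x y,
   \<lambda>i. \<Sum>k\<in>K. lam k * fst (snd k) i, \<lambda>i. \<Sum>k\<in>K. lam k * snd (snd k) i)"

lemma LL_comb:
  assumes "finite K" "(\<Sum>k\<in>K. lam k) = 1"
  shows "LL u (comb K lam) = (\<Sum>k\<in>K. lam k * LL u k)"
proof -
  have "LL u (comb K lam) = LA u + (\<Sum>k\<in>K. lam k * Lq u (fst k)) + (\<Sum>k\<in>K. lam k * Lr u (fst (snd k)) (snd (snd k)))"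
    unfolding comb_def Lagr_split using Lq_comb[OF assms(1)] Lr_comb[OF assms(1)] by simp
  also have "LA u = (\<Sum>k\<in>K. lam k * LA u)" using assms(2) by (simp add: sum_distrib_right[symmetric])
  finally show ?thesis unfolding Lagr_split by (simp add: sum.distrib algebra_simps)
qed


definition "bq i = (if i \<in> {1..n} then {-1..1} else {0::real})"
definition "brr M i = (if i \<in> {1..n} then {0..M} else {0::real})"
lemma bq_in: "i \<in> {1..n} \<Longrightarrow> bq i = {-1..1}" unfolding bq_def by (rule if_P)
lemma bq_out: "i \<notin> {1..n} \<Longrightarrow> bq i = {0}" unfolding bq_def by (rule if_not_P)
lemma brr_in: "i \<in> {1..n} \<Longrightarrow> brr M i = {0..M}" unfolding brr_def by (rule if_P)
lemma brr_out: "i \<notin> {1..n} \<Longrightarrow> brr M i = {0}" unfolding brr_def by (rule if_not_P)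

definition "DB M = {d::'v dtrip. (\<forall>i x y. fst d i x y \<in> bq i) \<and> (\<forall>i. fst (snd d) i \<in> brr M i)
   \<and> (\<forall>i. snd (snd d) i \<in> brr M i)}"

lemma compact_DB: "compact (DB M)"
proof -
  have e: "DB M = Pi\<^sub>E UNIV (\<lambda>i. Pi\<^sub>E UNIV (\<lambda>x. Pi\<^sub>E UNIV (\<lambda>y. bq i))) \<times> Pi\<^sub>E UNIV (brr M) \<times> Pi\<^sub>E UNIV (brr M)"
    by (auto simp: DB_def PiE_iff)
  show ?thesis unfolding e
    by (intro compact_Times compact_PiE_UNIV) (auto simp: bq_def brr_def)
qed

lemma DB_feas:
  assumes M: "0 \<le> M" "ereal M \<le> \<gamma>" and d: "d \<in> DB M"
  shows "dual_feas n \<gamma> (fst d) (fst (snd d)) (snd (snd d))"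
proof -
  have a: "-1 \<le> fst d i x y \<and> fst d i x y \<le> 1" if "i \<in> {1..n}" for i x y
  proof -
    from d have "fst d i x y \<in> bq i" by (simp add: DB_def)
    then show ?thesis using that by (simp add: bq_def)
  qed
  have b: "0 \<le> fst (snd d) i \<and> fst (snd d) i \<le> M \<and> 0 \<le> snd (snd d) i \<and> snd (snd d) i \<le> M" if "i \<in> {1..n}" for i
  proof -
    from d have "fst (snd d) i \<in> brr M i" "snd (snd d) i \<in> brr M i" by (simp_all add: DB_def)
    then show ?thesis using that by (simp add: brr_def)
  qed
  have c: "ereal r \<le> \<gamma>" if "r \<le> M" for r using M(2) that by (meson ereal_less_eq(3) order_trans)
  show ?thesis unfolding dual_feas_def using a b c by (auto simp: abs_le_iff)
qed

lemma comb_DB: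
  assumes "finite K" "K \<subseteq> DB M" "\<And>k. k \<in> K \<Longrightarrow> lam k \<ge> 0" "(\<Sum>k\<in>K. lam k) = 1"
  shows "comb K lam \<in> DB M"
proof -
  have q: "(\<Sum>k\<in>K. lam k * fst k i x y) \<in> bq i" for i x y
  proof (cases "i \<in> {1..n}")
    case True
    have "-1 \<le> fst k i x y \<and> fst k i x y \<le> 1" if "k \<in> K" for k
    proof -
      from assms(2) that have "fst k i x y \<in> bq i" by (auto simp: DB_def)
      then show ?thesis using True by (simp add: bq_def)
    qed
    then have "-1 \<le> (\<Sum>k\<in>K. lam k * fst k i x y) \<and> (\<Sum>k\<in>K. lam k * fst k i x y) \<le> 1"
      using assms by (intro convex_sum_Icc) auto
    then show ?thesis using True by (simp add: bq_def)
  next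
    case False
    have "0 \<le> fst k i x y \<and> fst k i x y \<le> 0" if "k \<in> K" for k
    proof -
      from assms(2) that have "fst k i x y \<in> bq i" by (auto simp: DB_def)
      moreover have "bq i = {0}" using False by (simp add: bq_def)
      ultimately show ?thesis by simp
    qed
    then have "0 \<le> (\<Sum>k\<in>K. lam k * fst k i x y) \<and> (\<Sum>k\<in>K. lam k * fst k i x y) \<le> 0"
      using assms by (intro convex_sum_Icc) auto
    then show ?thesis using False by (simp add: bq_def)
  qed
  have r: "(\<Sum>k\<in>K. lam k * R k i) \<in> brr M i" if R: "\<And>k. k \<in> K \<Longrightarrow> R k i \<in> brr M i" for R i
  proof (cases "i \<in> {1..n}")
    case True
    have "0 \<le> (\<Sum>k\<in>K. lam k * R k i) \<and> (\<Sum>k\<in>K. lam k * R k i) \<le> M"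
      using assms True R by (intro convex_sum_Icc) (auto simp: brr_def)
    then show ?thesis using True by (simp add: brr_def)
  next
    case False
    have "0 \<le> (\<Sum>k\<in>K. lam k * R k i) \<and> (\<Sum>k\<in>K. lam k * R k i) \<le> 0"
      using assms R by (intro convex_sum_Icc) (auto simp: brr_out[OF False])
    then show ?thesis by (simp add: brr_out[OF False])
  qed
  have r1: "(\<Sum>k\<in>K. lam k * fst (snd k) i) \<in> brr M i" for i
    by (rule r[of "\<lambda>k. fst (snd k)"]) (use assms(2) in \<open>auto simp: DB_def\<close>)
  have r2: "(\<Sum>k\<in>K. lam k * snd (snd k) i) \<in> brr M i" for i
    by (rule r[of "\<lambda>k. snd (snd k)"]) (use assms(2) in \<open>auto simp: DB_def\<close>)
  show ?thesis using q r1 r2 by (simp add: DB_def comb_def)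
qed

definition "T0 = {\<phi>::'v \<Rightarrow> 'v \<Rightarrow> real. \<forall>x y. \<phi> x y \<in> {-1, 1}}"
definition "Qs = {q::nat \<Rightarrow> 'v \<Rightarrow> 'v \<Rightarrow> real. (\<forall>i. i \<notin> {1..n} \<longrightarrow> q i = (\<lambda>x y. 0)) \<and> (\<forall>i\<in>{1..n}. q i \<in> T0)}"
definition "Rs = {r::nat \<Rightarrow> real. (\<forall>i. i \<notin> {1..n} \<longrightarrow> r i = 0) \<and> (\<forall>i\<in>{1..n}. r i \<in> {0, Gm})}"
definition "Dv = Qs \<times> Rs \<times> Rs"

lemma finite_Qs: "finite Qs"
proof -
  have "T0 = Pi\<^sub>E UNIV (\<lambda>x. Pi\<^sub>E UNIV (\<lambda>y. {-1, 1::real}))" by (auto simp: T0_def PiE_iff)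
  moreover have "finite (Pi\<^sub>E (UNIV::'v set) (\<lambda>x. Pi\<^sub>E (UNIV::'v set) (\<lambda>y. {-1, 1::real})))"
    by (intro finite_PiE) auto
  ultimately have "finite T0" by simp
  then show "finite Qs" unfolding Qs_def by (intro finite_ext) auto
qed

lemma finite_Dv: "finite Dv"
proof -
  have "T0 = Pi\<^sub>E UNIV (\<lambda>x. Pi\<^sub>E UNIV (\<lambda>y. {-1, 1::real}))" by (auto simp: T0_def PiE_iff)
  moreover have "finite (Pi\<^sub>E (UNIV::'v set) (\<lambda>x. Pi\<^sub>E (UNIV::'v set) (\<lambda>y. {-1, 1::real})))"
    by (intro finite_PiE) auto
  ultimately have "finite T0" by simp
  then have "finite Qs" unfolding Qs_def by (intro finite_ext) auto
  moreover have "finite Rs" unfolding Rs_def by (intro finite_ext) auto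
  ultimately show ?thesis by (simp add: Dv_def)
qed

lemma Dv_DB: "Dv \<subseteq> DB Gm"
proof
  fix d assume d: "d \<in> Dv"
  have "fst d i x y \<in> bq i" for i x y
  proof (cases "i \<in> {1..n}")
    case True
    then have "fst d i \<in> T0" using d by (auto simp: Dv_def Qs_def)
    then have "fst d i x y \<in> {-1, 1}" by (simp add: T0_def)
    then show ?thesis using True by (auto simp: bq_def)
  next
    case False
    then have "fst d i = (\<lambda>x y. 0)" using d by (auto simp: Dv_def Qs_def)
    then show ?thesis using False by (simp add: bq_def)
  qed
  moreover have "r i \<in> brr Gm i" if r: "r \<in> Rs" for r i
  proof (cases "i \<in> {1..n}")
    case True
    then have "r i \<in> {0, Gm}" using r by (simp add: Rs_def)
    then show ?thesis using Gm_nn by (auto simp: brr_in[OF True])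
  next
    case False
    then have "r i = 0" using r by (simp add: Rs_def)
    then show ?thesis by (simp add: brr_out[OF False])
  qed
  ultimately show "d \<in> DB Gm" using d by (auto simp: DB_def Dv_def)
qed

lemma vert_Dv: "(qv u, r1v u, r2v u) \<in> Dv"
  by (auto simp: Dv_def Qs_def Rs_def T0_def qv_def r1v_def r2v_def sgnq_def fun_eq_iff)

lemma uam_U0: "uam q r1 r2 \<in> U0"
  using pick_in uam_inBrel[of q r1 r2] by (auto simp: U0_def bx_def uam_def inBrel_def)


lemma strong_fin:
  assumes fin: "\<gamma> \<noteq> \<infinity>" and us: "relaxed_sol n w C Sl Su \<gamma> us"
  shows "\<exists>d\<in>DB Gm. energy n w C Sl Su \<gamma> us \<le> DD d"
proof (rule fip_dual[OF compact_DB])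
  fix c assume c: "c < energy n w C Sl Su \<gamma> us"
  define f where "f k u = LL u k - c" for k u
  have "\<exists>lam. (\<forall>k\<in>Dv. 0 \<le> lam k) \<and> (\<Sum>k\<in>Dv. lam k) = 1 \<and> (\<forall>u\<in>U0. (\<Sum>k\<in>Dv. lam k * f k u) > 0)"
  proof (rule sep_lemma[OF compact_U0 _ finite_Dv, where mix=mixu])
    show "U0 \<noteq> {}" using F0_ne by (auto simp: F0_def)
    show "continuous_on U0 (f k)" for k unfolding f_def by (intro continuous_intros)
    show "mixu t u v \<in> U0" if "0 \<le> t" "t \<le> 1" "u \<in> U0" "v \<in> U0" for t u v
      using mixu_U0 that by blast
    show "f k (mixu t u v) = t * f k u + (1 - t) * f k v" for k t u v
      unfolding f_def mixu_Lagr by (simp add: algebra_simps)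
    show "\<exists>k\<in>Dv. f k u > 0" if u: "u \<in> U0" for u
    proof (intro bexI[of _ "(qv u, r1v u, r2v u)"] vert_Dv)
      have "inBrel n u \<and> size_ok n Sl Su \<gamma> u" using U0_inBrel[OF u] fin by (simp add: size_ok_def)
      then have "energy n w C Sl Su \<gamma> us \<le> energy n w C Sl Su \<gamma> u"
        using us by (simp add: relaxed_sol_def)
      then show "0 < f (qv u, r1v u, r2v u) u" using c by (simp add: f_def vert_eq)
    qed
  qed
  then obtain lam where lam: "\<forall>k\<in>Dv. 0 \<le> lam k" "(\<Sum>k\<in>Dv. lam k) = 1"
    "\<forall>u\<in>U0. (\<Sum>k\<in>Dv. lam k * f k u) > 0" by blast
  define d where "d = comb Dv lam"
  have dDB: "d \<in> DB Gm" unfolding d_def using lam by (intro comb_DB[OF finite_Dv Dv_DB]) auto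
  define u where "u = uam (fst d) (fst (snd d)) (snd (snd d))"
  have "DD d = LL u d" by (simp add: u_def uam_L)
  also have "\<dots> = (\<Sum>k\<in>Dv. lam k * LL u k)" unfolding d_def using LL_comb[OF finite_Dv lam(2)] by simp
  also have "\<dots> = (\<Sum>k\<in>Dv. lam k * f k u) + c * (\<Sum>k\<in>Dv. lam k)"
    by (simp add: f_def sum_distrib_left sum.distrib[symmetric] algebra_simps)
  finally have "DD d = (\<Sum>k\<in>Dv. lam k * f k u) + c" using lam(2) by simp
  moreover have "u \<in> U0" unfolding u_def by (rule uam_U0)
  ultimately have "c < DD d" using lam(3) by auto
  then show "\<exists>d\<in>DB Gm. c < DD d" using dDB by blast
qed


definition "AA = (\<Sum>i\<in>{1..n}. \<Sum>x\<in>UNIV. \<bar>C i x\<bar>) + (\<Sum>x\<in>UNIV. \<Sum>y\<in>UNIV. w x y)"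

lemma AA_nn: "AA \<ge> 0"
  unfolding AA_def using w_nn by (intro add_nonneg_nonneg sum_nonneg) auto

lemma a_bound:
  assumes phi: "\<And>x y. \<bar>\<phi> x y\<bar> \<le> 1" and i: "i \<in> {1..n}"
  shows "\<bar>C i x + divw w \<phi> x\<bar> \<le> AA"
proof -
  have "\<bar>divw w \<phi> x\<bar> \<le> (1/2) * (\<Sum>y\<in>UNIV. \<bar>w x y * (\<phi> x y - \<phi> y x)\<bar>)"
    unfolding divw_def by (simp add: sum_abs)
  also have "\<dots> \<le> (1/2) * (\<Sum>y\<in>UNIV. w x y * 2)"
  proof (intro mult_left_mono sum_mono)
    fix y
    have "\<bar>\<phi> x y - \<phi> y x\<bar> \<le> 2" using phi[of x y] phi[of y x] by linarith
    then show "\<bar>w x y * (\<phi> x y - \<phi> y x)\<bar> \<le> w x y * 2"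
      using w_nn[of x y] by (simp add: abs_mult mult_left_mono)
  qed simp
  also have "\<dots> = (\<Sum>y\<in>UNIV. w x y)" by (simp add: sum_distrib_right[symmetric])
  also have "\<dots> \<le> (\<Sum>x\<in>UNIV. \<Sum>y\<in>UNIV. w x y)"
    using w_nn by (intro member_le_sum sum_nonneg) auto
  finally have d: "\<bar>divw w \<phi> x\<bar> \<le> (\<Sum>x\<in>UNIV. \<Sum>y\<in>UNIV. w x y)" .
  have "\<bar>C i x\<bar> \<le> (\<Sum>x\<in>UNIV. \<bar>C i x\<bar>)" by (intro member_le_sum) auto
  also have "\<dots> \<le> (\<Sum>i\<in>{1..n}. \<Sum>x\<in>UNIV. \<bar>C i x\<bar>)"
    using i by (intro member_le_sum sum_nonneg) auto
  finally have c: "\<bar>C i x\<bar> \<le> (\<Sum>i\<in>{1..n}. \<Sum>x\<in>UNIV. \<bar>C i x\<bar>)" .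
  show ?thesis using c d unfolding AA_def by (smt (verit) abs_triangle_ineq)
qed

definition "cn (\<delta>::nat \<Rightarrow> real) = ((\<lambda>i. if i \<in> {1..n} then max 0 (- \<delta> i) else 0),
   (\<lambda>i. if i \<in> {1..n} then max 0 (\<delta> i) else 0))"

lemma cn_out: "i \<notin> {1..n} \<Longrightarrow> fst (cn \<delta>) i = 0 \<and> snd (cn \<delta>) i = 0"
  unfolding cn_def by simp (meson if_not_P)

definition "Gf q \<delta> = (\<Sum>x\<in>(UNIV::'v set). Min ((\<lambda>i. C i x + divw w (q i) x + \<delta> i) ` {1..n}))
   + (\<Sum>i\<in>{1..n}. max 0 (- \<delta> i) * real (Sl i) - max 0 (\<delta> i) * real (Su i))"

lemma G_eq: "dual_obj n w C Sl Su q (fst (cn \<delta>)) (snd (cn \<delta>)) = Gf q \<delta>"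
proof -
  have "(\<lambda>i. coef w C q (fst (cn \<delta>)) (snd (cn \<delta>)) i x) ` {1..n} = (\<lambda>i. C i x + divw w (q i) x + \<delta> i) ` {1..n}" for x
    by (intro image_cong refl) (auto simp: coef_def cn_def max_def)
  then show ?thesis unfolding dual_obj_def Gf_def
    by (intro arg_cong2[where f="(+)"] sum.cong refl) (auto simp: cn_def)
qed

lemma G_ge:
  assumes "\<And>i. i \<in> {1..n} \<Longrightarrow> 0 \<le> r1 i \<and> 0 \<le> r2 i"
  shows "dual_obj n w C Sl Su q r1 r2 \<le> Gf q (\<lambda>i. r2 i - r1 i)"
proof -
  have "(\<lambda>i. coef w C q r1 r2 i x) ` {1..n} = (\<lambda>i. C i x + divw w (q i) x + (r2 i - r1 i)) ` {1..n}" for x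
    by (intro image_cong refl) (auto simp: coef_def)
  moreover have "(\<Sum>i\<in>{1..n}. r1 i * real (Sl i) - r2 i * real (Su i))
      \<le> (\<Sum>i\<in>{1..n}. max 0 (- (r2 i - r1 i)) * real (Sl i) - max 0 (r2 i - r1 i) * real (Su i))"
    using assms S_le by (intro sum_mono) (simp add: lin_ge)
  ultimately show ?thesis unfolding dual_obj_def Gf_def by simp
qed

lemma G_clip:
  assumes qb: "\<And>i x y. i \<in> {1..n} \<Longrightarrow> \<bar>q i x y\<bar> \<le> 1"
    and m: "\<And>i. i \<in> {1..n} \<Longrightarrow> m \<le> \<delta> i" "i0 \<in> {1..n}" "\<delta> i0 = m"
  shows "Gf q \<delta> \<le> Gf q (\<lambda>i. min (\<delta> i) (m + 2 * AA))"
proof -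
  let ?a = "\<lambda>i x. C i x + divw w (q i) x"
  have ab: "\<bar>?a i x\<bar> \<le> AA" if "i \<in> {1..n}" for i x using a_bound[OF qb[OF that] that] .
  have fin: "finite {1..n}" "{1..n} \<noteq> {}" using m(2) by auto
  have mins: "Min ((\<lambda>i. ?a i x + min (\<delta> i) (m + 2 * AA)) ` {1..n}) = Min ((\<lambda>i. ?a i x + \<delta> i) ` {1..n})" for x
  proof (rule antisym)
    have "Min ((\<lambda>i. ?a i x + \<delta> i) ` {1..n}) \<in> (\<lambda>i. ?a i x + \<delta> i) ` {1..n}"
      by (rule Min_in) (use fin in auto)
    then obtain j where j: "j \<in> {1..n}" "Min ((\<lambda>i. ?a i x + \<delta> i) ` {1..n}) = ?a j x + \<delta> j"
      by blast
    have "Min ((\<lambda>i. ?a i x + min (\<delta> i) (m + 2 * AA)) ` {1..n}) \<le> ?a j x + min (\<delta> j) (m + 2 * AA)"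
      using j fin by (intro Min_le) auto
    also have "\<dots> \<le> ?a j x + \<delta> j" by simp
    finally show "Min ((\<lambda>i. ?a i x + min (\<delta> i) (m + 2 * AA)) ` {1..n}) \<le> Min ((\<lambda>i. ?a i x + \<delta> i) ` {1..n})"
      using j by simp
    show "Min ((\<lambda>i. ?a i x + \<delta> i) ` {1..n}) \<le> Min ((\<lambda>i. ?a i x + min (\<delta> i) (m + 2 * AA)) ` {1..n})"
    proof (rule Min.boundedI)
      show "finite ((\<lambda>i. ?a i x + min (\<delta> i) (m + 2 * AA)) ` {1..n})" by simp
      show "(\<lambda>i. ?a i x + min (\<delta> i) (m + 2 * AA)) ` {1..n} \<noteq> {}" using fin by simp
      fix y assume "y \<in> (\<lambda>i. ?a i x + min (\<delta> i) (m + 2 * AA)) ` {1..n}"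
      then obtain i where i: "i \<in> {1..n}" and y: "y = ?a i x + min (\<delta> i) (m + 2 * AA)" by blast
      have M0: "Min ((\<lambda>i. ?a i x + \<delta> i) ` {1..n}) \<le> ?a i x + \<delta> i" using i fin by (intro Min_le) auto
      have M1: "Min ((\<lambda>i. ?a i x + \<delta> i) ` {1..n}) \<le> ?a i0 x + \<delta> i0" using m(2) fin by (intro Min_le) auto
      have "?a i0 x \<le> AA" "- AA \<le> ?a i x" using ab[OF m(2), of x] ab[OF i, of x] by linarith+
      then show "Min ((\<lambda>i. ?a i x + \<delta> i) ` {1..n}) \<le> y"
        using M0 M1 m(3) unfolding y by (auto simp: min_def)
    qed
  qed
  have "(\<Sum>i\<in>{1..n}. max 0 (- \<delta> i) * real (Sl i) - max 0 (\<delta> i) * real (Su i))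
     \<le> (\<Sum>i\<in>{1..n}. max 0 (- min (\<delta> i) (m + 2 * AA)) * real (Sl i) - max 0 (min (\<delta> i) (m + 2 * AA)) * real (Su i))"
    by (intro sum_mono h_anti) auto
  then show ?thesis unfolding Gf_def mins by simp
qed

lemma G_shift_pos:
  assumes m: "0 < m" "\<And>i. i \<in> {1..n} \<Longrightarrow> m \<le> \<delta> i"
  shows "Gf q \<delta> \<le> Gf q (\<lambda>i. \<delta> i - m)"
proof -
  have fin: "finite {1..n}" "{1..n} \<noteq> {}" using n1 by auto
  have mins: "(\<Sum>x\<in>(UNIV::'v set). Min ((\<lambda>i. C i x + divw w (q i) x + (\<delta> i - m)) ` {1..n}))
     = (\<Sum>x\<in>(UNIV::'v set). Min ((\<lambda>i. C i x + divw w (q i) x + \<delta> i) ` {1..n})) - real CARD('v) * m"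
  proof -
    have "Min ((\<lambda>i. C i x + divw w (q i) x + (\<delta> i - m)) ` {1..n}) = Min ((\<lambda>i. C i x + divw w (q i) x + \<delta> i) ` {1..n}) - m" for x
      using Min_shift[OF fin, of "\<lambda>i. C i x + divw w (q i) x + \<delta> i" m] by (simp add: algebra_simps)
    then show ?thesis by (simp add: sum_subtractf)
  qed
  have lin: "(\<Sum>i\<in>{1..n}. max 0 (- (\<delta> i - m)) * real (Sl i) - max 0 (\<delta> i - m) * real (Su i))
     = (\<Sum>i\<in>{1..n}. max 0 (- \<delta> i) * real (Sl i) - max 0 (\<delta> i) * real (Su i)) + m * real (\<Sum>i\<in>{1..n}. Su i)"
  proof -
    have "max 0 (- (\<delta> i - m)) * real (Sl i) - max 0 (\<delta> i - m) * real (Su i)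
        = (max 0 (- \<delta> i) * real (Sl i) - max 0 (\<delta> i) * real (Su i)) + m * real (Su i)" if "i \<in> {1..n}" for i
      using m(1) m(2)[OF that] by (simp add: max_def algebra_simps)
    then show ?thesis by (simp add: sum.distrib sum_distrib_left)
  qed
  have cs: "real CARD('v) \<le> real (\<Sum>i\<in>{1..n}. Su i)" unfolding of_nat_le_iff by (rule S_sum2)
  have "real CARD('v) * m \<le> real (\<Sum>i\<in>{1..n}. Su i) * m"
    using cs m(1) by (intro mult_right_mono) auto
  then show ?thesis unfolding Gf_def mins lin by (simp add: algebra_simps)
qed

lemma G_shift_neg:
  assumes m: "M < 0" "\<And>i. i \<in> {1..n} \<Longrightarrow> \<delta> i \<le> M"
  shows "Gf q \<delta> \<le> Gf q (\<lambda>i. \<delta> i - M)"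
proof -
  have fin: "finite {1..n}" "{1..n} \<noteq> {}" using n1 by auto
  have mins: "(\<Sum>x\<in>(UNIV::'v set). Min ((\<lambda>i. C i x + divw w (q i) x + (\<delta> i - M)) ` {1..n}))
     = (\<Sum>x\<in>(UNIV::'v set). Min ((\<lambda>i. C i x + divw w (q i) x + \<delta> i) ` {1..n})) - real CARD('v) * M"
  proof -
    have "Min ((\<lambda>i. C i x + divw w (q i) x + (\<delta> i - M)) ` {1..n}) = Min ((\<lambda>i. C i x + divw w (q i) x + \<delta> i) ` {1..n}) - M" for x
      using Min_shift[OF fin, of "\<lambda>i. C i x + divw w (q i) x + \<delta> i" M] by (simp add: algebra_simps)
    then show ?thesis by (simp add: sum_subtractf)
  qed
  have lin: "(\<Sum>i\<in>{1..n}. max 0 (- (\<delta> i - M)) * real (Sl i) - max 0 (\<delta> i - M) * real (Su i))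
     = (\<Sum>i\<in>{1..n}. max 0 (- \<delta> i) * real (Sl i) - max 0 (\<delta> i) * real (Su i)) + M * real (\<Sum>i\<in>{1..n}. Sl i)"
  proof -
    have "max 0 (- (\<delta> i - M)) * real (Sl i) - max 0 (\<delta> i - M) * real (Su i)
        = (max 0 (- \<delta> i) * real (Sl i) - max 0 (\<delta> i) * real (Su i)) + M * real (Sl i)" if "i \<in> {1..n}" for i
      using m(1) m(2)[OF that] by (simp add: max_def algebra_simps)
    then show ?thesis by (simp add: sum.distrib sum_distrib_left)
  qed
  have cs: "real (\<Sum>i\<in>{1..n}. Sl i) \<le> real CARD('v)" unfolding of_nat_le_iff by (rule S_sum1)
  have "real CARD('v) * M \<le> real (\<Sum>i\<in>{1..n}. Sl i) * M"
    using cs m(1) by (intro mult_right_mono_neg) auto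
  then show ?thesis unfolding Gf_def mins lin by (simp add: algebra_simps)
qed


lemma clip:
  assumes qb: "\<And>i x y. i \<in> {1..n} \<Longrightarrow> \<bar>q i x y\<bar> \<le> 1"
    and r: "\<And>i. i \<in> {1..n} \<Longrightarrow> 0 \<le> r1 i \<and> 0 \<le> r2 i"
  shows "\<exists>r1' r2'. (\<forall>i. r1' i \<in> brr (2 * AA) i \<and> r2' i \<in> brr (2 * AA) i) \<and>
     dual_obj n w C Sl Su q r1 r2 \<le> dual_obj n w C Sl Su q r1' r2'"
proof -
  have fin: "finite {1..n}" "{1..n} \<noteq> {}" using n1 by auto
  define \<delta> where "\<delta> i = r2 i - r1 i" for i
  define m where "m = Min (\<delta> ` {1..n})"
  have m_le: "m \<le> \<delta> i" if "i \<in> {1..n}" for i unfolding m_def using that by (intro Min_le) auto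
  have "m \<in> \<delta> ` {1..n}" unfolding m_def using fin by (intro Min_in) auto
  then obtain i0 where i0: "i0 \<in> {1..n}" "\<delta> i0 = m" by auto
  define \<delta>1 where "\<delta>1 i = min (\<delta> i) (m + 2 * AA)" for i
  have s1: "dual_obj n w C Sl Su q r1 r2 \<le> Gf q \<delta>1"
  proof -
    have "dual_obj n w C Sl Su q r1 r2 \<le> Gf q \<delta>" unfolding \<delta>_def by (rule G_ge[OF r])
    also have "\<dots> \<le> Gf q \<delta>1" unfolding \<delta>1_def by (rule G_clip[of q m \<delta> i0, OF qb m_le i0])
    finally show ?thesis .
  qed
  have d1b: "m \<le> \<delta>1 i \<and> \<delta>1 i \<le> m + 2 * AA" if "i \<in> {1..n}" for i
    using m_le[OF that] AA_nn by (auto simp: \<delta>1_def)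
  define Mx where "Mx = Max (\<delta>1 ` {1..n})"
  have Mx_ge: "\<delta>1 i \<le> Mx" if "i \<in> {1..n}" for i unfolding Mx_def using that by (intro Max_ge) auto
  have "Mx \<in> \<delta>1 ` {1..n}" unfolding Mx_def using fin by (intro Max_in) auto
  then obtain i1 where i1: "i1 \<in> {1..n}" "\<delta>1 i1 = Mx" by auto
  have mMx: "m \<le> Mx" "Mx \<le> m + 2 * AA" using d1b[OF i1(1)] i1(2) by auto
  define s where "s = (if m > 0 then m else if Mx < 0 then Mx else 0)"
  define \<delta>2 where "\<delta>2 i = \<delta>1 i - s" for i
  have s2: "Gf q \<delta>1 \<le> Gf q \<delta>2"
  proof (cases "m > 0")
    case True
    have "Gf q \<delta>1 \<le> Gf q (\<lambda>i. \<delta>1 i - m)"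
      by (rule G_shift_pos) (use True d1b in auto)
    then show ?thesis unfolding \<delta>2_def s_def using True by simp
  next
    case False
    show ?thesis
    proof (cases "Mx < 0")
      case True
      have "Gf q \<delta>1 \<le> Gf q (\<lambda>i. \<delta>1 i - Mx)"
        by (rule G_shift_neg) (use True Mx_ge in auto)
      then show ?thesis unfolding \<delta>2_def s_def using True False by simp
    next
      case F2: False
      then have "\<delta>2 = \<delta>1" using False by (simp add: \<delta>2_def s_def fun_eq_iff)
      then show ?thesis by simp
    qed
  qed
  have d2b: "- (2 * AA) \<le> \<delta>2 i \<and> \<delta>2 i \<le> 2 * AA" if "i \<in> {1..n}" for i
    using d1b[OF that] Mx_ge[OF that] mMx AA_nn by (auto simp: \<delta>2_def s_def)
  show ?thesis
  proof (intro exI conjI allI)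
    fix i
    show "fst (cn \<delta>2) i \<in> brr (2 * AA) i" "snd (cn \<delta>2) i \<in> brr (2 * AA) i"
    proof -
      show "fst (cn \<delta>2) i \<in> brr (2 * AA) i"
      proof (cases "i \<in> {1..n}")
        case True then show ?thesis using d2b[OF True] AA_nn by (simp add: cn_def brr_in)
      next
        case False then show ?thesis using cn_out[OF False] by (simp add: brr_out[OF False])
      qed
      show "snd (cn \<delta>2) i \<in> brr (2 * AA) i"
      proof (cases "i \<in> {1..n}")
        case True then show ?thesis using d2b[OF True] AA_nn by (simp add: cn_def brr_in)
      next
        case False then show ?thesis using cn_out[OF False] by (simp add: brr_out[OF False])
      qed
    qed
  next
    show "dual_obj n w C Sl Su q r1 r2 \<le> dual_obj n w C Sl Su q (fst (cn \<delta>2)) (snd (cn \<delta>2))"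
      unfolding G_eq using s1 s2 by linarith
  qed
qed


lemma Lr_zero: "Lr u (\<lambda>_. 0) (\<lambda>_. 0) = 0"
  by (simp add: Lr_def)

lemma strong_inf:
  assumes inf: "\<gamma> = \<infinity>" and us: "relaxed_sol n w C Sl Su \<gamma> us"
  shows "\<exists>d\<in>DB (2 * AA). energy n w C Sl Su \<gamma> us \<le> DD d"
proof (rule fip_dual[OF compact_DB])
  fix c assume c: "c < energy n w C Sl Su \<gamma> us"
  define K where "K = Inl ` Qs \<union> Inr ` ({1..n} \<times> (UNIV::bool set))"
  define f where "f k u = (case k of Inl q \<Rightarrow> Lagr n w C Sl Su u q (\<lambda>_. 0) (\<lambda>_. 0) - c
     | Inr ib \<Rightarrow> (if snd ib then real (Sl (fst ib)) - usize (u (fst ib)) else usize (u (fst ib)) - real (Su (fst ib))))"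
    for k :: "(nat \<Rightarrow> 'v \<Rightarrow> 'v \<Rightarrow> real) + (nat \<times> bool)" and u :: "nat \<Rightarrow> 'v \<Rightarrow> real"
  have finK: "finite K" unfolding K_def using finite_Qs by auto
  have Gm0: "Gm = 0" unfolding Gm_def using inf by simp
  have "\<exists>lam. (\<forall>k\<in>K. 0 \<le> lam k) \<and> (\<Sum>k\<in>K. lam k) = 1 \<and> (\<forall>u\<in>U0. (\<Sum>k\<in>K. lam k * f k u) > 0)"
  proof (rule sep_lemma[OF compact_U0 _ finK, where mix=mixu])
    show "U0 \<noteq> {}" using F0_ne by (auto simp: F0_def)
    show "continuous_on U0 (f k)" for k
    proof (cases k)
      case (Inl q) then show ?thesis unfolding f_def by (simp, intro continuous_intros)
    next
      case (Inr ib)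
      then obtain i b where k: "k = Inr (i, b)" by (cases ib) auto
      show ?thesis
      proof (cases b)
        case True then show ?thesis unfolding f_def k by (simp, intro continuous_intros)
      next
        case False then show ?thesis unfolding f_def k by (simp, intro continuous_intros)
      qed
    qed
    show "mixu t u v \<in> U0" if "0 \<le> t" "t \<le> 1" "u \<in> U0" "v \<in> U0" for t u v
      using mixu_U0 that by blast
    show "f k (mixu t u v) = t * f k u + (1 - t) * f k v" for k t u v
    proof (cases k)
      case (Inl q) then show ?thesis unfolding f_def by (simp add: mixu_Lagr algebra_simps)
    next
      case (Inr ib) then show ?thesis unfolding f_def by (simp add: mixu_usize algebra_simps)
    qed
    show "\<exists>k\<in>K. f k u > 0" if u: "u \<in> U0" for u
    proof (cases "size_ok n Sl Su \<gamma> u")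
      case True
      have "energy n w C Sl Su \<gamma> us \<le> energy n w C Sl Su \<gamma> u"
        using us U0_inBrel[OF u] True by (simp add: relaxed_sol_def)
      moreover have "r1v u = (\<lambda>_. 0)" "r2v u = (\<lambda>_. 0)" by (auto simp: r1v_def r2v_def Gm0)
      ultimately have "f (Inl (qv u)) u > 0" using c vert_eq[of u] by (simp add: f_def)
      moreover have "Inl (qv u) \<in> K"
        using vert_Dv[of u] by (auto simp: K_def Dv_def)
      ultimately show ?thesis by blast
    next
      case False
      then obtain i where i: "i \<in> {1..n}" "\<not> (real (Sl i) \<le> usize (u i) \<and> usize (u i) \<le> real (Su i))"
        using inf by (auto simp: size_ok_def)
      show ?thesis
      proof (cases "real (Sl i) \<le> usize (u i)")
        case True
        then have "f (Inr (i, False)) u > 0" using i by (simp add: f_def)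
        then show ?thesis using i by (auto simp: K_def)
      next
        case False
        then have "f (Inr (i, True)) u > 0" by (simp add: f_def)
        then show ?thesis using i by (auto simp: K_def)
      qed
    qed
  qed
  then obtain lam where lam: "\<forall>k\<in>K. 0 \<le> lam k" "(\<Sum>k\<in>K. lam k) = 1"
    "\<forall>u\<in>U0. (\<Sum>k\<in>K. lam k * f k u) > 0" by blast
  define lq where "lq q = lam (Inl q)" for q
  define lT where "lT i = lam (Inr (i, True))" for i
  define lF where "lF i = lam (Inr (i, False))" for i
  have lq_nn: "q \<in> Qs \<Longrightarrow> 0 \<le> lq q" for q using lam(1) by (auto simp: lq_def K_def)
  have lTF_nn: "i \<in> {1..n} \<Longrightarrow> 0 \<le> lT i \<and> 0 \<le> lF i" for i using lam(1) by (auto simp: lT_def lF_def K_def)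
  define L where "L = (\<Sum>q\<in>Qs. lq q)"
  have tot: "(\<Sum>k\<in>K. lam k * f k u) = (\<Sum>q\<in>Qs. lq q * (Lagr n w C Sl Su u q (\<lambda>_. 0) (\<lambda>_. 0) - c))
      + (\<Sum>i\<in>{1..n}. lT i * (real (Sl i) - usize (u i)) + lF i * (usize (u i) - real (Su i)))" for u
    unfolding K_def by (subst sum_split_sum[OF finite_Qs]) (auto simp: f_def lq_def lT_def lF_def)
  have Lpos: "L > 0"
  proof -
    define uz where "uz = nz us"
    have uzF: "uz \<in> F0" unfolding uz_def using us by (simp add: F0_def nz_U0 nz_size relaxed_sol_def)
    then have uzU: "uz \<in> U0" and uzs: "size_ok n Sl Su \<gamma> uz" by (auto simp: F0_def)
    have "(\<Sum>i\<in>{1..n}. lT i * (real (Sl i) - usize (uz i)) + lF i * (usize (uz i) - real (Su i))) \<le> 0"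
    proof (intro sum_nonpos)
      fix i assume i: "i \<in> {1..n}"
      then have "real (Sl i) - usize (uz i) \<le> 0" "usize (uz i) - real (Su i) \<le> 0"
        using uzs inf by (auto simp: size_ok_def)
      then show "lT i * (real (Sl i) - usize (uz i)) + lF i * (usize (uz i) - real (Su i)) \<le> 0"
        using lTF_nn[OF i] by (simp add: add_nonpos_nonpos mult_nonneg_nonpos)
    qed
    then have pos: "(\<Sum>q\<in>Qs. lq q * (Lagr n w C Sl Su uz q (\<lambda>_. 0) (\<lambda>_. 0) - c)) > 0"
      using lam(3) uzU tot[of uz] by auto
    have "L \<ge> 0" unfolding L_def using lq_nn by (simp add: sum_nonneg)
    moreover have "L \<noteq> 0"
    proof
      assume "L = 0"
      then have "\<forall>q\<in>Qs. lq q = 0" using sum_nonneg_eq_0_iff[OF finite_Qs, of lq] lq_nn by (simp add: L_def)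
      then show False using pos by simp
    qed
    ultimately show ?thesis by simp
  qed
  define qb where "qb = (\<lambda>i x y. \<Sum>q\<in>Qs. (lq q / L) * q i x y)"
  define r1b where "r1b = (\<lambda>i. if i \<in> {1..n} then lT i / L else 0)"
  define r2b where "r2b = (\<lambda>i. if i \<in> {1..n} then lF i / L else 0)"
  have key: "Lagr n w C Sl Su u qb r1b r2b - c = (\<Sum>k\<in>K. lam k * f k u) / L" for u
  proof -
    have t1: "(\<Sum>q\<in>Qs. lq q * (Lagr n w C Sl Su u q (\<lambda>_. 0) (\<lambda>_. 0) - c)) = L * (LA u - c) + (\<Sum>q\<in>Qs. lq q * Lq u q)"
    proof -
      have "(\<Sum>q\<in>Qs. lq q * (Lagr n w C Sl Su u q (\<lambda>_. 0) (\<lambda>_. 0) - c)) = (\<Sum>q\<in>Qs. lq q * (LA u - c) + lq q * Lq u q)"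
        by (intro sum.cong refl) (simp add: Lagr_split Lr_zero algebra_simps)
      then show ?thesis by (simp add: sum.distrib L_def sum_distrib_right)
    qed
    have t2: "(\<Sum>i\<in>{1..n}. lT i * (real (Sl i) - usize (u i)) + lF i * (usize (u i) - real (Su i))) = L * Lr u r1b r2b"
      unfolding Lr_def sum_distrib_left using Lpos
      by (intro sum.cong refl) (simp add: r1b_def r2b_def field_simps)
    have t3: "Lq u qb = (\<Sum>q\<in>Qs. lq q * Lq u q) / L"
      unfolding qb_def Lq_comb[OF finite_Qs] by (simp add: sum_divide_distrib)
    have "(\<Sum>k\<in>K. lam k * f k u) = L * (LA u - c) + (\<Sum>q\<in>Qs. lq q * Lq u q) + L * Lr u r1b r2b"
      unfolding tot t1 t2 by simp
    then show ?thesis unfolding Lagr_split t3 using Lpos by (simp add: field_simps)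
  qed
  define db where "db = (qb, r1b, r2b)"
  have gt: "c < DD db"
  proof -
    define u where "u = uam qb r1b r2b"
    have "DD db = Lagr n w C Sl Su u qb r1b r2b" by (simp add: db_def u_def uam_L)
    moreover have "(\<Sum>k\<in>K. lam k * f k u) > 0" using lam(3) uam_U0 by (simp add: u_def)
    moreover have "(\<Sum>k\<in>K. lam k * f k u) / L > 0" using calculation(2) Lpos by simp
    ultimately show ?thesis using key[of u] by linarith
  qed
  have qin: "qb i x y \<in> bq i" for i x y
  proof (cases "i \<in> {1..n}")
    case True
    have "-1 \<le> qb i x y \<and> qb i x y \<le> 1" unfolding qb_def
    proof (rule convex_sum_Icc[OF finite_Qs])
      show "0 \<le> lq q / L" if "q \<in> Qs" for q using lq_nn[OF that] Lpos by simp
      show "(\<Sum>q\<in>Qs. lq q / L) = 1" using Lpos by (simp add: L_def sum_divide_distrib[symmetric])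
      show "-1 \<le> q i x y \<and> q i x y \<le> 1" if "q \<in> Qs" for q
      proof -
        have "q i \<in> T0" using that True by (simp add: Qs_def)
        then have "q i x y = -1 \<or> q i x y = 1" by (simp add: T0_def)
        then show ?thesis by auto
      qed
    qed
    then show ?thesis by (simp add: bq_in[OF True])
  next
    case False
    have "qb i x y = 0" unfolding qb_def using False by (intro sum.neutral) (auto simp: Qs_def)
    then show ?thesis by (simp add: bq_out[OF False])
  qed
  have "\<exists>r1' r2'. (\<forall>i. r1' i \<in> brr (2 * AA) i \<and> r2' i \<in> brr (2 * AA) i) \<and>
     dual_obj n w C Sl Su qb r1b r2b \<le> dual_obj n w C Sl Su qb r1' r2'"
  proof (rule clip)
    show "\<bar>qb i x y\<bar> \<le> 1" if "i \<in> {1..n}" for i x y using qin[of i x y] that by (simp add: bq_in abs_le_iff)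
    show "0 \<le> r1b i \<and> 0 \<le> r2b i" if "i \<in> {1..n}" for i using lTF_nn[OF that] Lpos that by (simp add: r1b_def r2b_def)
  qed
  then obtain r1' r2' where r': "\<forall>i. r1' i \<in> brr (2 * AA) i \<and> r2' i \<in> brr (2 * AA) i"
    "dual_obj n w C Sl Su qb r1b r2b \<le> dual_obj n w C Sl Su qb r1' r2'" by blast
  have "(qb, r1', r2') \<in> DB (2 * AA)" using qin r'(1) by (simp add: DB_def)
  moreover have "c < DD (qb, r1', r2')" using gt r'(2) by (simp add: db_def)
  ultimately show "\<exists>d\<in>DB (2 * AA). c < DD d" by blast
qed


lemma main:
  shows "(\<exists>q \<rho>1 \<rho>2. dual_max n w C Sl Su \<gamma> q \<rho>1 \<rho>2) \<and>
    (\<forall>q \<rho>1 \<rho>2. dual_max n w C Sl Su \<gamma> q \<rho>1 \<rho>2 \<longrightarrow>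
       (\<exists>u. relaxed_sol n w C Sl Su \<gamma> u \<and> pd_pair n w C Sl Su \<gamma> u q \<rho>1 \<rho>2) \<and>
       (\<forall>u. relaxed_sol n w C Sl Su \<gamma> u \<and> pd_pair n w C Sl Su \<gamma> u q \<rho>1 \<rho>2 \<longrightarrow>
          (\<forall>x. (\<Sum>i\<in>Imin n w C q \<rho>1 \<rho>2 x. u i x) = 1 \<and>
               (\<forall>j\<in>{1..n}. j \<notin> Imin n w C q \<rho>1 \<rho>2 x \<longrightarrow> u j x = 0)) \<and>
          (\<forall>x i0. Imin n w C q \<rho>1 \<rho>2 x = {i0} \<longrightarrow>
               u i0 x = 1 \<and> (\<forall>i\<in>{1..n}. i \<noteq> i0 \<longrightarrow> u i x = 0)) \<and>
          ((\<forall>x. \<exists>i0. Imin n w C q \<rho>1 \<rho>2 x = {i0}) \<longrightarrow> orig_sol n w C Sl Su \<gamma> u)))"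
proof -
  obtain us where usF: "us \<in> F0" and us: "relaxed_sol n w C Sl Su \<gamma> us" using relaxed_exists by blast
  have usB: "inBrel n us" and usS: "size_ok n Sl Su \<gamma> us" using us by (auto simp: relaxed_sol_def)
  obtain d0 where d0f: "dual_feas n \<gamma> (fst d0) (fst (snd d0)) (snd (snd d0))"
    and d0: "energy n w C Sl Su \<gamma> us \<le> DD d0"
  proof (cases "\<gamma> = \<infinity>")
    case True
    then obtain d where dd: "d \<in> DB (2 * AA)" "energy n w C Sl Su \<gamma> us \<le> DD d" using strong_inf us by blast
    have "0 \<le> 2 * AA" using AA_nn by simp
    moreover have "ereal (2 * AA) \<le> \<gamma>" using True by simp
    ultimately have "dual_feas n \<gamma> (fst d) (fst (snd d)) (snd (snd d))" using dd(1) by (rule DB_feas)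
    then show ?thesis using dd(2) by (rule that)
  next
    case False
    then obtain d where "d \<in> DB Gm" "energy n w C Sl Su \<gamma> us \<le> DD d" using strong_fin us by blast
    then show ?thesis using that DB_feas Gm_nn Gm_le by blast
  qed
  have weak: "dual_obj n w C Sl Su q' r1 r2 \<le> energy n w C Sl Su \<gamma> us" if "dual_feas n \<gamma> q' r1 r2" for q' r1 r2
    using weak_a[OF usB, of q' r1 r2] weak_b[OF usS that] by linarith
  have P1: "dual_max n w C Sl Su \<gamma> (fst d0) (fst (snd d0)) (snd (snd d0))"
    unfolding dual_max_def using d0f d0 weak by (meson order_trans)
  have P2: "(\<exists>u. relaxed_sol n w C Sl Su \<gamma> u \<and> pd_pair n w C Sl Su \<gamma> u q \<rho>1 \<rho>2) \<and>
       (\<forall>u. relaxed_sol n w C Sl Su \<gamma> u \<and> pd_pair n w C Sl Su \<gamma> u q \<rho>1 \<rho>2 \<longrightarrow>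
          (\<forall>x. (\<Sum>i\<in>Imin n w C q \<rho>1 \<rho>2 x. u i x) = 1 \<and>
               (\<forall>j\<in>{1..n}. j \<notin> Imin n w C q \<rho>1 \<rho>2 x \<longrightarrow> u j x = 0)) \<and>
          (\<forall>x i0. Imin n w C q \<rho>1 \<rho>2 x = {i0} \<longrightarrow>
               u i0 x = 1 \<and> (\<forall>i\<in>{1..n}. i \<noteq> i0 \<longrightarrow> u i x = 0)) \<and>
          ((\<forall>x. \<exists>i0. Imin n w C q \<rho>1 \<rho>2 x = {i0}) \<longrightarrow> orig_sol n w C Sl Su \<gamma> u))"
    if dm: "dual_max n w C Sl Su \<gamma> q \<rho>1 \<rho>2" for q \<rho>1 \<rho>2
  proof (rule conjI)
    have df: "dual_feas n \<gamma> q \<rho>1 \<rho>2" using dm by (simp add: dual_max_def)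
    have ge: "energy n w C Sl Su \<gamma> us \<le> dual_obj n w C Sl Su q \<rho>1 \<rho>2"
      using dm d0f d0 unfolding dual_max_def by (meson order_trans)
    have "pd_pair n w C Sl Su \<gamma> us q \<rho>1 \<rho>2"
      unfolding pd_pair_def
    proof (intro conjI allI impI usB df)
      fix u' :: "nat \<Rightarrow> 'v \<Rightarrow> real" assume "inBrel n u'"
      then have "dual_obj n w C Sl Su q \<rho>1 \<rho>2 \<le> Lagr n w C Sl Su u' q \<rho>1 \<rho>2" by (rule weak_a)
      moreover have "Lagr n w C Sl Su us q \<rho>1 \<rho>2 \<le> energy n w C Sl Su \<gamma> us" by (rule weak_b[OF usS df])
      ultimately show "Lagr n w C Sl Su us q \<rho>1 \<rho>2 \<le> Lagr n w C Sl Su u' q \<rho>1 \<rho>2" using ge by linarith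
    next
      fix q' :: "nat \<Rightarrow> 'v \<Rightarrow> 'v \<Rightarrow> real" and r1 r2 assume "dual_feas n \<gamma> q' r1 r2"
      then have "Lagr n w C Sl Su us q' r1 r2 \<le> energy n w C Sl Su \<gamma> us" by (rule weak_b[OF usS])
      moreover have "dual_obj n w C Sl Su q \<rho>1 \<rho>2 \<le> Lagr n w C Sl Su us q \<rho>1 \<rho>2" by (rule weak_a[OF usB])
      ultimately show "Lagr n w C Sl Su us q' r1 r2 \<le> Lagr n w C Sl Su us q \<rho>1 \<rho>2" using ge by linarith
    qed
    then show "\<exists>u. relaxed_sol n w C Sl Su \<gamma> u \<and> pd_pair n w C Sl Su \<gamma> u q \<rho>1 \<rho>2" using us by blast
  next
    show "\<forall>u. relaxed_sol n w C Sl Su \<gamma> u \<and> pd_pair n w C Sl Su \<gamma> u q \<rho>1 \<rho>2 \<longrightarrow>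
          (\<forall>x. (\<Sum>i\<in>Imin n w C q \<rho>1 \<rho>2 x. u i x) = 1 \<and>
               (\<forall>j\<in>{1..n}. j \<notin> Imin n w C q \<rho>1 \<rho>2 x \<longrightarrow> u j x = 0)) \<and>
          (\<forall>x i0. Imin n w C q \<rho>1 \<rho>2 x = {i0} \<longrightarrow>
               u i0 x = 1 \<and> (\<forall>i\<in>{1..n}. i \<noteq> i0 \<longrightarrow> u i x = 0)) \<and>
          ((\<forall>x. \<exists>i0. Imin n w C q \<rho>1 \<rho>2 x = {i0}) \<longrightarrow> orig_sol n w C Sl Su \<gamma> u)"
    proof (intro allI impI)
    fix u assume u: "relaxed_sol n w C Sl Su \<gamma> u \<and> pd_pair n w C Sl Su \<gamma> u q \<rho>1 \<rho>2"
    have uB: "inBrel n u" using u by (simp add: relaxed_sol_def)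
    have mn: "\<forall>u'. inBrel n u' \<longrightarrow> Lagr n w C Sl Su u q \<rho>1 \<rho>2 \<le> Lagr n w C Sl Su u' q \<rho>1 \<rho>2"
      using u by (simp add: pd_pair_def)
    note pA = partA[OF uB mn]
    have A1: "\<forall>x. (\<Sum>i\<in>Imin n w C q \<rho>1 \<rho>2 x. u i x) = 1 \<and>
               (\<forall>j\<in>{1..n}. j \<notin> Imin n w C q \<rho>1 \<rho>2 x \<longrightarrow> u j x = 0)" using pA by blast
    have sing: "u i0 x = 1 \<and> (\<forall>i\<in>{1..n}. i \<noteq> i0 \<longrightarrow> u i x = 0)" if "Imin n w C q \<rho>1 \<rho>2 x = {i0}" for x i0
      using pA[of x] that by auto
    have A2: "\<forall>x i0. Imin n w C q \<rho>1 \<rho>2 x = {i0} \<longrightarrow> u i0 x = 1 \<and> (\<forall>i\<in>{1..n}. i \<noteq> i0 \<longrightarrow> u i x = 0)"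
      using sing by blast
    have A3: "(\<forall>x. \<exists>i0. Imin n w C q \<rho>1 \<rho>2 x = {i0}) \<longrightarrow> orig_sol n w C Sl Su \<gamma> u"
    proof
    assume all: "\<forall>x. \<exists>i0. Imin n w C q \<rho>1 \<rho>2 x = {i0}"
    have bin: "inBbin n u"
      unfolding inBbin_def
    proof (intro allI conjI ballI)
      fix x i assume i: "i \<in> {1..n}"
      obtain i0 where i0: "Imin n w C q \<rho>1 \<rho>2 x = {i0}" using all by blast
      show "u i x \<in> {0, 1}" using sing[OF i0] i by (cases "i = i0") auto
    next
      fix x show "(\<Sum>i\<in>{1..n}. u i x) = 1" using uB by (simp add: inBrel_def)
    qed
    show "orig_sol n w C Sl Su \<gamma> u"
      unfolding orig_sol_def
    proof (intro conjI allI impI bin)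
      show "size_ok n Sl Su \<gamma> u" using u by (simp add: relaxed_sol_def)
      fix u' :: "nat \<Rightarrow> 'v \<Rightarrow> real" assume u': "inBbin n u' \<and> size_ok n Sl Su \<gamma> u'"
      then have "inBrel n u'" by (simp add: bin_rel)
      then show "energy n w C Sl Su \<gamma> u \<le> energy n w C Sl Su \<gamma> u'"
        using u u' by (simp add: relaxed_sol_def)
    qed
    qed
    show "(\<forall>x. (\<Sum>i\<in>Imin n w C q \<rho>1 \<rho>2 x. u i x) = 1 \<and>
               (\<forall>j\<in>{1..n}. j \<notin> Imin n w C q \<rho>1 \<rho>2 x \<longrightarrow> u j x = 0)) \<and>
          (\<forall>x i0. Imin n w C q \<rho>1 \<rho>2 x = {i0} \<longrightarrow>
               u i0 x = 1 \<and> (\<forall>i\<in>{1..n}. i \<noteq> i0 \<longrightarrow> u i x = 0)) \<and>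
          ((\<forall>x. \<exists>i0. Imin n w C q \<rho>1 \<rho>2 x = {i0}) \<longrightarrow> orig_sol n w C Sl Su \<gamma> u)"
      using A1 A2 A3 by blast
    qed
  qed
  show ?thesis using P1 P2 by blast
qed

end

theorem theorem2:
  fixes E :: "('v::finite \<times> 'v) set" and w :: "'v \<Rightarrow> 'v \<Rightarrow> real"
    and n :: nat and C :: "nat \<Rightarrow> 'v \<Rightarrow> real" and Sl Su :: "nat \<Rightarrow> nat" and \<gamma> :: ereal
  assumes E_sym: "\<forall>x y. (x, y) \<in> E \<longleftrightarrow> (y, x) \<in> E"
    and E_irrefl: "\<forall>x. (x, x) \<notin> E"
    and w_pos: "\<forall>x y. (x, y) \<in> E \<longrightarrow> w x y > 0"
    and w_zero: "\<forall>x y. (x, y) \<notin> E \<longrightarrow> w x y = 0"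
    and w_sym: "\<forall>x y. w x y = w y x"
    and n2: "n \<ge> 2"
    and S_le: "\<forall>i\<in>{1..n}. Sl i \<le> Su i"
    and S_sum: "(\<Sum>i\<in>{1..n}. Sl i) \<le> CARD('v)" "CARD('v) \<le> (\<Sum>i\<in>{1..n}. Su i)"
    and gam: "\<gamma> \<ge> 0"
  shows "(\<exists>q \<rho>1 \<rho>2. dual_max n w C Sl Su \<gamma> q \<rho>1 \<rho>2) \<and>
    (\<forall>q \<rho>1 \<rho>2. dual_max n w C Sl Su \<gamma> q \<rho>1 \<rho>2 \<longrightarrow>
       (\<exists>u. relaxed_sol n w C Sl Su \<gamma> u \<and> pd_pair n w C Sl Su \<gamma> u q \<rho>1 \<rho>2) \<and>
       (\<forall>u. relaxed_sol n w C Sl Su \<gamma> u \<and> pd_pair n w C Sl Su \<gamma> u q \<rho>1 \<rho>2 \<longrightarrow>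
          (\<forall>x. (\<Sum>i\<in>Imin n w C q \<rho>1 \<rho>2 x. u i x) = 1 \<and>
               (\<forall>j\<in>{1..n}. j \<notin> Imin n w C q \<rho>1 \<rho>2 x \<longrightarrow> u j x = 0)) \<and>
          (\<forall>x i0. Imin n w C q \<rho>1 \<rho>2 x = {i0} \<longrightarrow>
               u i0 x = 1 \<and> (\<forall>i\<in>{1..n}. i \<noteq> i0 \<longrightarrow> u i x = 0)) \<and>
          ((\<forall>x. \<exists>i0. Imin n w C q \<rho>1 \<rho>2 x = {i0}) \<longrightarrow> orig_sol n w C Sl Su \<gamma> u)))"
proof (rule main)
  show "0 \<le> w x y" for x y using w_pos w_zero by (cases "(x, y) \<in> E") (auto intro: less_imp_le)
  show "w x y = w y x" for x y using w_sym by blast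
  show "1 \<le> n" using n2 by simp
  show "Sl i \<le> Su i" if "i \<in> {1..n}" for i using S_le that by blast
  show "0 \<le> \<gamma>" by (rule gam)
  show "(\<Sum>i\<in>{1..n}. Sl i) \<le> CARD('v)" "CARD('v) \<le> (\<Sum>i\<in>{1..n}. Su i)" by (rule S_sum(1), rule S_sum(2))
qed

end
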